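(* Let $f \in C^1(\mathcal{T})$ and $g \in C^1([0,1])$, where $\mathcal{T}=\{(x,y)\in\mathbb{R}^2: 0\le y\le x\le 1\}$, and set $M_f=\sup_{(x,y)\in\mathcal{T}}|f(x,y)|$. Let $k\in C^1(\mathcal{T})$ be the solution of the Goursat problem $$k_y(x,y)+k_x(x,y)=f(x,y)-\int_y^x f(x,\eta)k(\eta,y)\,d\eta \ \ \forall (x,y)\in\mathcal{T},\qquad k(1,y)=0\ \ \forall y\in[0,1],$$ and define the observer gain $p_1(x)=g(x)-k(x,0)$. Consider the plant $$u_t(x,t)=u_x(x,t)+g(x)u(0,t)+\int_0^x f(x,y)u(y,t)\,dy,\qquad u(1,t)=U(t),\qquad Y(t)=u(0,t),$$ with initial condition $u(\cdot,0)=u_0$, and the observer $$\hat u_t(x,t)=\hat u_x(x,t)+g(x)\hat u(0,t)+\int_0^x f(x,y)\hat u(y,t)\,dy+p_1(x)\,[u(0,t)-\hat u(0,t)],\qquad \hat u(1,t)=U(t),$$ with initial condition $\hat u(\cdot,0)=\hat u_0$. Let $U\in C^1(\mathbb{R}^+)$ and $u_0,\hat u_0\in C^1([0,1])$ satisfy the compatibility conditions $$u_0(1)=U(0),\qquad \dot U(0)=u_0'(1)+g(1)u_0(0)+\int_0^1 f(1,y)u_0(y)\,dy,$$ $$\hat u_0(1)=U(0),\qquad \dot U(0)=\hat u_0'(1)+g(1)\hat u_0(0)+\int_0^1 f(1,y)\hat u_0(y)\,dy+p_1(1)\,[u_0(0)-\hat u_0(0)].$$ Then for all $t\ge 0$ and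 all $c>0$, the (classical) solutions satisfy $$\|u[t]-\hat u[t]\|\le M e^{-ct}\|u_0-\hat u_0\|,\qquad M=e^{c}\Big(1+\big(M_f e^{M_f}\big)e^{M_f e^{M_f}}\Big)\big(1+M_f e^{M_f}\big).$$ Moreover, $\hat u(x,t)=u(x,t)$ for all $x\in[0,1]$ and all $t\ge 1$, i.e., the observer error is zero for $t\ge 1$ and remains zero thereafter.
   Context: $\mathbb{R}^+=[0,\infty)$. For a function $u:[0,1]\times\mathbb{R}^+\to\mathbb{R}$, $u[t]$ denotes the profile $x\mapsto u(x,t)$, and $\|\cdot\|$ is the norm of $L^2(0,1)$. The Goursat problem for $k$ has a unique $C^1(\mathcal{T})$ solution under the stated regularity of $f$, $g$. Under the stated compatibility conditions the plant and observer systems have unique classical solutions defined for all $t\ge 0$. *)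

theory Defs
  imports "HOL-Analysis.Analysis"
begin

definition Tri :: "(real \<times> real) set" where
  "Tri = {(x, y). 0 \<le> y \<and> y \<le> x \<and> x \<le> 1}"

definition Dom :: "(real \<times> real) set" where
  "Dom = {0..1} \<times> {0..}"

definition C1_with :: "(real \<times> real \<Rightarrow> real) \<Rightarrow> (real \<times> real \<Rightarrow> real \<times> real \<Rightarrow> real)
    \<Rightarrow> (real \<times> real) set \<Rightarrow> bool" where
  "C1_with h h' S \<longleftrightarrow>
     (\<forall>p\<in>S. (h has_derivative h' p) (at p within S)) \<and> (\<forall>v. continuous_on S (\<lambda>p. h' p v))"

definition C1_on2 :: "(real \<times> real \<Rightarrow> real) \<Rightarrow> (real \<times> real) set \<Rightarrow> bool" where
  "C1_on2 h S \<longleftrightarrow> (\<exists>h'. C1_with h h' S)"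

definition C1_with1 :: "(real \<Rightarrow> real) \<Rightarrow> (real \<Rightarrow> real) \<Rightarrow> real set \<Rightarrow> bool" where
  "C1_with1 h h' S \<longleftrightarrow>
     (\<forall>x\<in>S. (h has_real_derivative h' x) (at x within S)) \<and> continuous_on S h'"

definition C1_on1 :: "(real \<Rightarrow> real) \<Rightarrow> real set \<Rightarrow> bool" where
  "C1_on1 h S \<longleftrightarrow> (\<exists>h'. C1_with1 h h' S)"

definition L2norm :: "(real \<Rightarrow> real) \<Rightarrow> real" where
  "L2norm h = sqrt (integral {0..1} (\<lambda>x. (h x)\<^sup>2))"

end

theory Submission
  imports Defs
begin

lemma integral_clamp_split:
  fixes G :: "real \<Rightarrow> real"
  assumes "a \<le> lo" "lo \<le> hi" "hi \<le> b" "continuous_on {lo..hi} G"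
  shows "integral {a..b} (\<lambda>s. G (max lo (min s hi))) =
         (lo - a) * G lo + integral {lo..hi} G + (b - hi) * G hi"
proof -
  let ?H = "\<lambda>s. G (max lo (min s hi))"
  have cH: "continuous_on {a..b} ?H"
    by (rule continuous_on_compose2[OF assms(4)]) (use assms(2) in \<open>auto intro!: continuous_intros\<close>)
  have iH: "?H integrable_on {a..b}" using cH integrable_continuous_real by blast
  have i1: "?H integrable_on {a..hi}" using iH integrable_subinterval_real assms by fastforce
  have "integral {a..b} ?H = integral {a..hi} ?H + integral {hi..b} ?H"
    using Henstock_Kurzweil_Integration.integral_combine[OF _ _ iH, of hi] assms by simp
  also have "integral {a..hi} ?H = integral {a..lo} ?H + integral {lo..hi} ?H"
    using Henstock_Kurzweil_Integration.integral_combine[OF _ _ i1, of lo] assms by simp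
  also have "integral {a..lo} ?H = integral {a..lo} (\<lambda>s. G lo)"
    by (rule integral_cong) (use assms in auto)
  also have "integral {lo..hi} ?H = integral {lo..hi} G"
    by (rule integral_cong) (use assms in auto)
  also have "integral {hi..b} ?H = integral {hi..b} (\<lambda>s. G hi)"
    by (rule integral_cong) (use assms in auto)
  finally show ?thesis using assms by simp
qed

lemma cont_var_integral:
  fixes G :: "'a::metric_space \<Rightarrow> real \<Rightarrow> real"
  assumes clo: "continuous_on U lo" and chi: "continuous_on U hi"
    and rng: "\<And>p. p \<in> U \<Longrightarrow> a \<le> lo p \<and> lo p \<le> hi p \<and> hi p \<le> b"
    and cG: "continuous_on {(p,s). p \<in> U \<and> lo p \<le> s \<and> s \<le> hi p} (\<lambda>(p,s). G p s)"
  shows "continuous_on U (\<lambda>p. integral {lo p..hi p} (G p))"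
proof -
  let ?c = "\<lambda>p s. max (lo p) (min s (hi p))"
  have c1: "continuous_on (U \<times> {a..b}) (\<lambda>(p,s). G p (?c p s))"
  proof -
    have "continuous_on (U \<times> {a..b}) ((\<lambda>(p,s). G p s) \<circ> (\<lambda>(p,s). (p, ?c p s)))"
    proof (rule continuous_on_compose)
      show "continuous_on (U \<times> {a..b}) (\<lambda>(p,s). (p, ?c p s))"
        unfolding case_prod_beta
        by (intro continuous_intros continuous_on_compose2[OF clo] continuous_on_compose2[OF chi]) auto
      show "continuous_on ((\<lambda>(p,s). (p, ?c p s)) ` (U \<times> {a..b})) (\<lambda>(p,s). G p s)"
        by (rule continuous_on_subset[OF cG]) (auto dest: rng)
    qed
    then show ?thesis by (simp add: o_def case_prod_beta)
  qed
  have c2: "continuous_on U (\<lambda>p. integral (cbox a b) (\<lambda>s. G p (?c p s)))"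
    by (rule integral_continuous_on_param) (use c1 in \<open>simp add: cbox_interval\<close>)
  have cGp: "continuous_on {lo p..hi p} (G p)" if "p \<in> U" for p
    by (rule continuous_on_compose2[OF cG, where f="\<lambda>s. (p,s)", simplified])
       (use that in \<open>auto intro!: continuous_intros\<close>)
  have eq: "integral {lo p..hi p} (G p) = integral (cbox a b) (\<lambda>s. G p (?c p s))
            - (lo p - a) * G p (lo p) - (b - hi p) * G p (hi p)" if "p \<in> U" for p
    using integral_clamp_split[of a "lo p" "hi p" b "G p"] rng[OF that] cGp[OF that]
    by (simp add: cbox_interval)
  have cGl: "continuous_on U (\<lambda>p. G p (lo p))"
    by (rule continuous_on_compose2[OF cG, where f="\<lambda>p. (p, lo p)", simplified])
       (use rng in \<open>auto intro!: continuous_intros clo\<close>)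
  have cGh: "continuous_on U (\<lambda>p. G p (hi p))"
    by (rule continuous_on_compose2[OF cG, where f="\<lambda>p. (p, hi p)", simplified])
       (use rng in \<open>auto intro!: continuous_intros chi\<close>)
  have "continuous_on U (\<lambda>p. integral (cbox a b) (\<lambda>s. G p (?c p s))
            - (lo p - a) * G p (lo p) - (b - hi p) * G p (hi p))"
    by (intro continuous_intros c2 cGl cGh clo chi)
  then show ?thesis by (rule continuous_on_eq) (simp add: eq)
qed

lemma int_tail_int:
  fixes h :: "real \<Rightarrow> real"
  assumes x: "0 \<le> x" and ch: "continuous_on {0..x} h"
  shows "integral {0..x} (\<lambda>y. integral {y..x} h) = integral {0..x} (\<lambda>s. s * h s)"
proof -
  let ?G = "\<lambda>y. integral {0..y} h"
  have ih: "h integrable_on {0..x}" by (rule integrable_continuous_real[OF ch])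
  have cG: "continuous_on {0..x} ?G" using indefinite_integral_continuous_1[OF ih] .
  have eq: "integral {y..x} h = ?G x - ?G y" if "y \<in> {0..x}" for y
    using Henstock_Kurzweil_Integration.integral_combine[OF _ _ ih, of y] that by auto
  have d: "((\<lambda>s. s * ?G s) has_vector_derivative (?G s + s * h s)) (at s within {0..x})"
    if "s \<in> {0..x}" for s
  proof -
    have "((\<lambda>s. s * ?G s) has_real_derivative (1 * ?G s + h s * s)) (at s within {0..x})"
      by (rule DERIV_mult[OF DERIV_ident integral_has_real_derivative[OF ch that]])
    then show ?thesis by (simp add: has_real_derivative_iff_has_vector_derivative mult.commute)
  qed
  have I1: "((\<lambda>s. ?G s + s * h s) has_integral (x * ?G x)) {0..x}"
    using fundamental_theorem_of_calculus[OF x d] by simp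
  have iG: "?G integrable_on {0..x}" by (rule integrable_continuous_real[OF cG])
  have I2: "((\<lambda>s. s * h s) has_integral (x * ?G x - integral {0..x} ?G)) {0..x}"
    using has_integral_diff[OF I1 integrable_integral[OF iG]] by simp
  have I3: "((\<lambda>y. ?G x - ?G y) has_integral (x * ?G x - integral {0..x} ?G)) {0..x}"
    using has_integral_diff[OF has_integral_const_real[of "?G x" 0 x] integrable_integral[OF iG]] x
    by (simp add: mult.commute)
  have "integral {0..x} (\<lambda>y. integral {y..x} h) = integral {0..x} (\<lambda>y. ?G x - ?G y)"
    by (rule integral_cong) (rule eq)
  also have "\<dots> = x * ?G x - integral {0..x} ?G" using I3 by (rule integral_unique)
  also have "\<dots> = integral {0..x} (\<lambda>s. s * h s)" using I2 by (rule integral_unique[symmetric])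
  finally show ?thesis .
qed

lemma tri_fubini:
  fixes H :: "real \<Rightarrow> real \<Rightarrow> real"
  assumes x: "0 \<le> x" and cH: "continuous_on {(y,s). 0 \<le> s \<and> s \<le> y \<and> y \<le> x} (\<lambda>(y,s). H y s)"
  shows "integral {0..x} (\<lambda>y. integral {0..y} (H y)) = integral {0..x} (\<lambda>s. integral {s..x} (\<lambda>y. H y s))"
proof -
  define D where "D = {(y,s). 0 \<le> s \<and> s \<le> y \<and> y \<le> (x::real)}"
  let ?Ht = "\<lambda>y s. H (max y s) s"
  let ?h = "\<lambda>s. H s s"
  let ?P = "\<lambda>y. integral {0..y} (H y)"
  let ?Q = "\<lambda>s. integral {s..x} (\<lambda>y. H y s)"
  have cHt: "continuous_on (cbox (0,0) (x,x)) (\<lambda>(y,s). ?Ht y s)"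
  proof -
    have "continuous_on (cbox (0,0) (x,x)) ((\<lambda>(y,s). H y s) \<circ> (\<lambda>(y,s). (max y s, s)))"
    proof (rule continuous_on_compose)
      show "continuous_on (cbox (0, 0) (x, x)) (\<lambda>(y, s). (max y s, s))"
        unfolding case_prod_beta by (intro continuous_intros)
      show "continuous_on ((\<lambda>(y, s). (max y s, s)) ` cbox (0, 0) (x, x)) (\<lambda>(y, s). H y s)"
        by (rule continuous_on_subset[OF cH]) (auto simp: cbox_Pair_eq)
    qed
    then show ?thesis by (simp add: o_def case_prod_beta)
  qed
  have swap: "integral (cbox 0 x) (\<lambda>y. integral (cbox 0 x) (?Ht y)) =
              integral (cbox 0 x) (\<lambda>s. integral (cbox 0 x) (\<lambda>y. ?Ht y s))"
    by (rule integral_swap_continuous[OF cHt])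
  have ch: "continuous_on {0..x} ?h"
    by (rule continuous_on_compose2[OF cH, where f="\<lambda>s. (s,s)", simplified]) (auto intro!: continuous_intros)
  have cHt1: "continuous_on {0..x} (?Ht y)" if "y \<in> {0..x}" for y
    by (rule continuous_on_compose2[OF cHt, where f="\<lambda>s. (y,s)", simplified])
       (use that in \<open>auto intro!: continuous_intros simp: cbox_Pair_eq\<close>)
  have cHt2: "continuous_on {0..x} (\<lambda>y. ?Ht y s)" if "s \<in> {0..x}" for s
    by (rule continuous_on_compose2[OF cHt, where f="\<lambda>y. (y,s)", simplified])
       (use that in \<open>auto intro!: continuous_intros simp: cbox_Pair_eq\<close>)
  have e1: "integral {0..x} (?Ht y) = ?P y + integral {y..x} ?h" if y: "y \<in> {0..x}" for y
  proof -
    have i: "?Ht y integrable_on {0..x}" using cHt1[OF y] integrable_continuous_real by blast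
    have "integral {0..x} (?Ht y) = integral {0..y} (?Ht y) + integral {y..x} (?Ht y)"
      using Henstock_Kurzweil_Integration.integral_combine[OF _ _ i, of y] y by auto
    also have "integral {0..y} (?Ht y) = ?P y" by (rule integral_cong) auto
    also have "integral {y..x} (?Ht y) = integral {y..x} ?h" by (rule integral_cong) auto
    finally show ?thesis .
  qed
  have e2: "integral {0..x} (\<lambda>y. ?Ht y s) = s * ?h s + ?Q s" if s: "s \<in> {0..x}" for s
  proof -
    have i: "(\<lambda>y. ?Ht y s) integrable_on {0..x}" using cHt2[OF s] integrable_continuous_real by blast
    have "integral {0..x} (\<lambda>y. ?Ht y s) = integral {0..s} (\<lambda>y. ?Ht y s) + integral {s..x} (\<lambda>y. ?Ht y s)"
      using Henstock_Kurzweil_Integration.integral_combine[OF _ _ i, of s] s by auto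
    also have "integral {0..s} (\<lambda>y. ?Ht y s) = integral {0..s} (\<lambda>y. ?h s)" by (rule integral_cong) auto
    also have "integral {s..x} (\<lambda>y. ?Ht y s) = ?Q s" by (rule integral_cong) auto
    finally show ?thesis using s by simp
  qed
  have cP: "continuous_on {0..x} ?P"
  proof (rule cont_var_integral[where a=0 and b=x and lo="\<lambda>_. 0" and hi="\<lambda>y. y" and G=H])
    show "continuous_on {(p,s). p \<in> {0..x} \<and> 0 \<le> s \<and> s \<le> p} (\<lambda>(p,s). H p s)"
      by (rule continuous_on_subset[OF cH]) auto
  qed (auto intro!: continuous_intros)
  have cQ: "continuous_on {0..x} ?Q"
  proof (rule cont_var_integral[where a=0 and b=x and lo="\<lambda>s. s" and hi="\<lambda>_. x" and G="\<lambda>s y. H y s"])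
    have "continuous_on {(s, y). s \<in> {0..x} \<and> s \<le> y \<and> y \<le> x} ((\<lambda>(y,s). H y s) \<circ> prod.swap)"
    proof (rule continuous_on_compose)
      show "continuous_on {(s, y). s \<in> {0..x} \<and> s \<le> y \<and> y \<le> x} prod.swap"
        by (intro continuous_intros)
      show "continuous_on (prod.swap ` {(s, y). s \<in> {0..x} \<and> s \<le> y \<and> y \<le> x}) (\<lambda>(y,s). H y s)"
        by (rule continuous_on_subset[OF cH]) auto
    qed
    then show "continuous_on {(s, y). s \<in> {0..x} \<and> s \<le> y \<and> y \<le> x} (\<lambda>(s, y). H y s)"
      by (simp add: o_def case_prod_beta)
  qed (auto intro!: continuous_intros)
  have cI: "continuous_on {0..x} (\<lambda>y. integral {y..x} ?h)"
    using indefinite_integral_continuous_1'[OF integrable_continuous_real[OF ch]] .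
  have csh: "continuous_on {0..x} (\<lambda>s. s * ?h s)" by (intro continuous_intros ch)
  have "integral {0..x} (\<lambda>y. integral {0..x} (?Ht y)) = integral {0..x} (\<lambda>y. ?P y + integral {y..x} ?h)"
    by (rule integral_cong) (rule e1)
  also have "\<dots> = integral {0..x} ?P + integral {0..x} (\<lambda>y. integral {y..x} ?h)"
    by (rule integral_add) (auto intro!: integrable_continuous_real cP cI)
  finally have L: "integral {0..x} (\<lambda>y. integral {0..x} (?Ht y)) = integral {0..x} ?P + integral {0..x} (\<lambda>s. s * ?h s)"
    using int_tail_int[OF x ch] by simp
  have "integral {0..x} (\<lambda>s. integral {0..x} (\<lambda>y. ?Ht y s)) = integral {0..x} (\<lambda>s. s * ?h s + ?Q s)"
    by (rule integral_cong) (rule e2)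
  also have "\<dots> = integral {0..x} (\<lambda>s. s * ?h s) + integral {0..x} ?Q"
    by (rule integral_add) (auto intro!: integrable_continuous_real cQ csh)
  finally have R: "integral {0..x} (\<lambda>s. integral {0..x} (\<lambda>y. ?Ht y s)) = integral {0..x} (\<lambda>s. s * ?h s) + integral {0..x} ?Q" .
  have swap': "integral {0..x} (\<lambda>y. integral {0..x} (?Ht y)) = integral {0..x} (\<lambda>s. integral {0..x} (\<lambda>y. ?Ht y s))"
    using swap by (simp only: cbox_interval)
  show ?thesis using swap' L R by linarith
qed

lemma deriv_var_int:
  fixes F Fx :: "real \<Rightarrow> real \<Rightarrow> real"
  assumes cF: "continuous_on {(x,y). 0 \<le> y \<and> y \<le> x \<and> x \<le> 1} (\<lambda>(x,y). F x y)"
   and cFx: "continuous_on {(x,y). 0 \<le> y \<and> y \<le> x \<and> x \<le> 1} (\<lambda>(x,y). Fx x y)"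
   and dF: "\<And>\<xi> y. 0 \<le> y \<Longrightarrow> y \<le> \<xi> \<Longrightarrow> \<xi> \<le> 1 \<Longrightarrow>
              ((\<lambda>\<xi>. F \<xi> y) has_real_derivative Fx \<xi> y) (at \<xi> within {y..1})"
   and x: "x \<in> {0..1}"
  shows "((\<lambda>x. integral {0..x} (F x)) has_real_derivative (F x x + integral {0..x} (Fx x))) (at x within {0..1})"
proof -
  let ?phi = "\<lambda>\<xi>. F \<xi> \<xi> + integral {0..\<xi>} (Fx \<xi>)"
  have c1: "continuous_on {0..1} (\<lambda>\<xi>. F \<xi> \<xi>)"
    by (rule continuous_on_compose2[OF cF, where f="\<lambda>s. (s,s)", simplified]) (auto intro!: continuous_intros)
  have c2: "continuous_on {0..1} (\<lambda>\<xi>. integral {0..\<xi>} (Fx \<xi>))"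
  proof (rule cont_var_integral[where a=0 and b=1 and lo="\<lambda>_. 0" and hi="\<lambda>y. y" and G=Fx])
    show "continuous_on {(p,s). p \<in> {0..1} \<and> 0 \<le> s \<and> s \<le> p} (\<lambda>(p,s). Fx p s)"
      by (rule continuous_on_subset[OF cFx]) auto
  qed (auto intro!: continuous_intros)
  have cphi: "continuous_on {0..1} ?phi" by (intro continuous_on_add c1 c2)
  have dA: "((\<lambda>z. integral {0..z} ?phi) has_real_derivative ?phi x) (at x within {0..1})"
    by (rule integral_has_real_derivative[OF cphi x])
  have eqz: "integral {0..z} (F z) = integral {0..z} ?phi" if z: "z \<in> {0..1}" for z
  proof -
    have ftc: "F z y = F y y + integral {y..z} (\<lambda>\<xi>. Fx \<xi> y)" if y: "y \<in> {0..z}" for y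
    proof -
      have "((\<lambda>\<xi>. Fx \<xi> y) has_integral (F z y - F y y)) {y..z}"
      proof (rule fundamental_theorem_of_calculus)
        show "y \<le> z" using y by simp
        fix \<xi> assume "\<xi> \<in> {y..z}"
        then have "((\<lambda>\<xi>. F \<xi> y) has_real_derivative Fx \<xi> y) (at \<xi> within {y..z})"
          using dF[of y \<xi>] y z by (auto intro: DERIV_subset)
        then show "((\<lambda>\<xi>. F \<xi> y) has_vector_derivative Fx \<xi> y) (at \<xi> within {y..z})"
          by (simp add: has_real_derivative_iff_has_vector_derivative)
      qed
      then show ?thesis by (simp add: integral_unique)
    qed
    have cA: "continuous_on {0..z} (\<lambda>y. F y y)" by (rule continuous_on_subset[OF c1]) (use z in auto)
    have cB: "continuous_on {0..z} (\<lambda>y. integral {y..z} (\<lambda>\<xi>. Fx \<xi> y))"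
    proof (rule cont_var_integral[where a=0 and b=z and lo="\<lambda>s. s" and hi="\<lambda>_. z" and G="\<lambda>y \<xi>. Fx \<xi> y"])
      have "continuous_on {(y, \<xi>). y \<in> {0..z} \<and> y \<le> \<xi> \<and> \<xi> \<le> z} ((\<lambda>(x,y). Fx x y) \<circ> prod.swap)"
      proof (rule continuous_on_compose)
        show "continuous_on {(y, \<xi>). y \<in> {0..z} \<and> y \<le> \<xi> \<and> \<xi> \<le> z} prod.swap"
          by (intro continuous_intros)
        show "continuous_on (prod.swap ` {(y, \<xi>). y \<in> {0..z} \<and> y \<le> \<xi> \<and> \<xi> \<le> z}) (\<lambda>(x,y). Fx x y)"
          by (rule continuous_on_subset[OF cFx]) (use z in auto)
      qed
      then show "continuous_on {(y, \<xi>). y \<in> {0..z} \<and> y \<le> \<xi> \<and> \<xi> \<le> z} (\<lambda>(y, \<xi>). Fx \<xi> y)"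
        by (simp add: o_def case_prod_beta)
    qed (use z in \<open>auto intro!: continuous_intros\<close>)
    have cFxz: "continuous_on {(y,s). 0 \<le> s \<and> s \<le> y \<and> y \<le> z} (\<lambda>(y,s). Fx y s)"
      by (rule continuous_on_subset[OF cFx]) (use z in auto)
    have "integral {0..z} (F z) = integral {0..z} (\<lambda>y. F y y + integral {y..z} (\<lambda>\<xi>. Fx \<xi> y))"
      by (rule integral_cong) (rule ftc)
    also have "\<dots> = integral {0..z} (\<lambda>y. F y y) + integral {0..z} (\<lambda>y. integral {y..z} (\<lambda>\<xi>. Fx \<xi> y))"
      by (rule integral_add) (rule integrable_continuous_real, fact)+
    also have "integral {0..z} (\<lambda>y. integral {y..z} (\<lambda>\<xi>. Fx \<xi> y)) = integral {0..z} (\<lambda>\<xi>. integral {0..\<xi>} (Fx \<xi>))"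
      by (rule tri_fubini[symmetric]) (use z cFxz in auto)
    also have "integral {0..z} (\<lambda>y. F y y) + \<dots> = integral {0..z} ?phi"
    proof (rule integral_add[symmetric])
      show "(\<lambda>y. F y y) integrable_on {0..z}" by (rule integrable_continuous_real, fact)
      show "(\<lambda>\<xi>. integral {0..\<xi>} (Fx \<xi>)) integrable_on {0..z}"
        by (rule integrable_continuous_real, rule continuous_on_subset[OF c2]) (use z in auto)
    qed
    finally show ?thesis .
  qed
  show ?thesis
    by (rule has_field_derivative_transform_within[OF dA zero_less_one x]) (simp add: eqz)
qed

lemma integral_pow_shift:
  fixes y x :: real
  assumes "y \<le> x"
  shows "integral {y..x} (\<lambda>s. (s - y) ^ n) = (x - y) ^ Suc n / real (Suc n)"
proof -
  have "((\<lambda>s. (s - y) ^ n) has_integral ((x - y) ^ Suc n / real (Suc n) - (y - y) ^ Suc n / real (Suc n))) {y..x}"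
  proof (rule fundamental_theorem_of_calculus[OF assms])
    fix s assume "s \<in> {y..x}"
    have d0: "((\<lambda>s. (s - y) ^ Suc n) has_real_derivative (real (Suc n) * (s - y) ^ n)) (at s within {y..x})"
      by (rule DERIV_cong, (rule derivative_intros)+) simp
    have "((\<lambda>s. (s - y) ^ Suc n / real (Suc n)) has_real_derivative
            (real (Suc n) * (s - y) ^ n / real (Suc n))) (at s within {y..x})"
      by (rule DERIV_cdivide[OF d0])
    then show "((\<lambda>s. (s - y) ^ Suc n / real (Suc n)) has_vector_derivative (s - y) ^ n) (at s within {y..x})"
      by (simp add: has_real_derivative_iff_has_vector_derivative del: of_nat_Suc)
  qed
  then show ?thesis by (simp add: integral_unique)
qed

lemma abs_integral_le:
  fixes f g :: "real \<Rightarrow> real"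
  assumes "f integrable_on {a..b}" "g integrable_on {a..b}" "\<And>x. x \<in> {a..b} \<Longrightarrow> \<bar>f x\<bar> \<le> g x"
  shows "\<bar>integral {a..b} f\<bar> \<le> integral {a..b} g"
  using integral_norm_bound_integral[OF assms(1,2)] assms(3) by simp

primrec itk :: "(real \<times> real \<Rightarrow> real) \<Rightarrow> nat \<Rightarrow> real \<times> real \<Rightarrow> real" where
  "itk k 0 = k"
| "itk k (Suc n) = (\<lambda>(x,y). integral {y..x} (\<lambda>s. k (x,s) * itk k n (s,y)))"

lemma Tri_iff: "(x,y) \<in> Tri \<longleftrightarrow> 0 \<le> y \<and> y \<le> x \<and> x \<le> 1"
  by (simp add: Tri_def)

lemma cont_tri_integral:
  fixes a b :: "real \<times> real \<Rightarrow> real"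
  assumes ca: "continuous_on Tri a" and cb: "continuous_on Tri b"
  shows "continuous_on Tri (\<lambda>(x,y). integral {y..x} (\<lambda>s. a (x,s) * b (s,y)))"
proof -
  have "continuous_on Tri (\<lambda>p. integral {snd p..fst p} (\<lambda>s. a (fst p, s) * b (s, snd p)))"
  proof (rule cont_var_integral[where a=0 and b=1])
    show "continuous_on {(p, s). p \<in> Tri \<and> snd p \<le> s \<and> s \<le> fst p} (\<lambda>(p, s). a (fst p, s) * b (s, snd p))"
    proof -
      let ?S = "{(p, s). p \<in> Tri \<and> snd p \<le> s \<and> s \<le> fst p}"
      have 1: "continuous_on ?S (\<lambda>q. a (fst (fst q), snd q))"
        by (rule continuous_on_compose2[OF ca]) (auto intro!: continuous_intros simp: Tri_def)
      have 2: "continuous_on ?S (\<lambda>q. b (snd q, snd (fst q)))"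
        by (rule continuous_on_compose2[OF cb]) (auto intro!: continuous_intros simp: Tri_def)
      show ?thesis using continuous_on_mult[OF 1 2] by (simp add: case_prod_beta)
    qed
  qed (auto intro!: continuous_intros simp: Tri_def)
  then show ?thesis by (simp add: case_prod_beta)
qed

locale vkern =
  fixes k :: "real \<times> real \<Rightarrow> real" and B :: real
  assumes ck: "continuous_on Tri k"
    and kB: "\<And>p. p \<in> Tri \<Longrightarrow> \<bar>k p\<bar> \<le> B"
begin

lemma B_nonneg: "0 \<le> B"
  using kB[of "(0,0)"] by (auto simp: Tri_def)

lemma itk_cont: "continuous_on Tri (itk k n)"
proof (induction n)
  case 0 then show ?case using ck by simp
next
  case (Suc n) then show ?case using cont_tri_integral[OF ck Suc] by simp
qed

lemma itk_bound: "(x,y) \<in> Tri \<Longrightarrow> \<bar>itk k n (x,y)\<bar> \<le> B ^ Suc n * (x - y) ^ n / fact n"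
proof (induction n arbitrary: x y)
  case 0 then show ?case using kB by simp
next
  case (Suc n)
  have T: "0 \<le> y" "y \<le> x" "x \<le> 1" using Suc.prems by (auto simp: Tri_def)
  have cka: "continuous_on {y..x} (\<lambda>s. k (x,s))"
    by (rule continuous_on_compose2[OF ck]) (use T in \<open>auto intro!: continuous_intros simp: Tri_def\<close>)
  have ckb: "continuous_on {y..x} (\<lambda>s. itk k n (s,y))"
    by (rule continuous_on_compose2[OF itk_cont]) (use T in \<open>auto intro!: continuous_intros simp: Tri_def\<close>)
  have "\<bar>itk k (Suc n) (x,y)\<bar> = \<bar>integral {y..x} (\<lambda>s. k (x,s) * itk k n (s,y))\<bar>" by simp
  also have "\<dots> \<le> integral {y..x} (\<lambda>s. B * (B ^ Suc n * (s - y) ^ n / fact n))"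
  proof (rule abs_integral_le)
    show "(\<lambda>s. k (x, s) * itk k n (s, y)) integrable_on {y..x}"
      by (intro integrable_continuous_real continuous_intros cka ckb)
    show "(\<lambda>s. B * (B ^ Suc n * (s - y) ^ n / fact n)) integrable_on {y..x}"
      by (intro integrable_continuous_real continuous_intros) auto
    fix s assume s: "s \<in> {y..x}"
    have "\<bar>k (x,s)\<bar> \<le> B" using kB s T by (auto simp: Tri_def)
    moreover have "\<bar>itk k n (s,y)\<bar> \<le> B ^ Suc n * (s - y) ^ n / fact n"
      using Suc.IH s T by (auto simp: Tri_def)
    ultimately have "\<bar>k (x, s)\<bar> * \<bar>itk k n (s, y)\<bar> \<le> B * (B ^ Suc n * (s - y) ^ n / fact n)"
      by (intro mult_mono) (auto simp: B_nonneg)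
    then show "\<bar>k (x, s) * itk k n (s, y)\<bar> \<le> B * (B ^ Suc n * (s - y) ^ n / fact n)"
      by (simp only: abs_mult)
  qed
  also have "\<dots> = B * (B ^ Suc n / fact n) * integral {y..x} (\<lambda>s. (s - y) ^ n)"
  proof -
    have "integral {y..x} (\<lambda>s. B * (B ^ Suc n * (s - y) ^ n / fact n)) =
          integral {y..x} (\<lambda>s. (B * (B ^ Suc n / fact n)) * (s - y) ^ n)"
      by (rule integral_cong) simp
    also have "\<dots> = B * (B ^ Suc n / fact n) * integral {y..x} (\<lambda>s. (s - y) ^ n)"
      by (rule integral_mult_right)
    finally show ?thesis .
  qed
  also have "\<dots> = B * (B ^ Suc n / fact n) * ((x - y) ^ Suc n / real (Suc n))"
    by (simp only: integral_pow_shift[OF T(2)])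
  also have "\<dots> = B ^ Suc (Suc n) * (x - y) ^ Suc n / fact (Suc n)"
    by (simp add: field_simps)
  finally show ?case .
qed


lemma itk_bound1: "p \<in> Tri \<Longrightarrow> \<bar>itk k n p\<bar> \<le> B ^ Suc n / fact n"
proof -
  assume p: "p \<in> Tri"
  obtain x y where xy: "p = (x,y)" by (cases p)
  have T: "0 \<le> x - y" "x - y \<le> 1" using p xy by (auto simp: Tri_def)
  have "\<bar>itk k n p\<bar> \<le> B ^ Suc n * (x - y) ^ n / fact n" using itk_bound p xy by simp
  also have "\<dots> \<le> B ^ Suc n * 1 / fact n"
    by (intro divide_right_mono mult_left_mono power_le_one) (use T B_nonneg in auto)
  finally show ?thesis by simp
qed

lemma Msums: "(\<lambda>n. B ^ Suc n / fact n) sums (B * exp B)"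
proof -
  have "(\<lambda>n. B * (B ^ n /\<^sub>R fact n)) sums (B * exp B)"
    by (rule sums_mult[OF exp_converges])
  moreover have "(\<lambda>n. B * (B ^ n /\<^sub>R fact n)) = (\<lambda>n. B ^ Suc n / fact n)"
    by (rule ext) (simp add: field_simps)
  ultimately show ?thesis by simp
qed

lemma Msumm: "summable (\<lambda>n. B ^ Suc n / fact n)"
  using Msums by (rule sums_summable)

definition res :: "real \<times> real \<Rightarrow> real" where
  "res p = (\<Sum>n. itk k n p)"

lemma res_summable: "p \<in> Tri \<Longrightarrow> summable (\<lambda>n. itk k n p)"
  by (rule summable_comparison_test'[OF Msumm]) (use itk_bound1 in auto)

lemma res_bound: "p \<in> Tri \<Longrightarrow> \<bar>res p\<bar> \<le> B * exp B"
proof -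
  assume p: "p \<in> Tri"
  have sa: "summable (\<lambda>n. \<bar>itk k n p\<bar>)"
    by (rule summable_comparison_test'[OF Msumm]) (use itk_bound1 p in auto)
  have "\<bar>res p\<bar> \<le> (\<Sum>n. \<bar>itk k n p\<bar>)" unfolding res_def by (rule summable_rabs[OF sa])
  also have "\<dots> \<le> (\<Sum>n. B ^ Suc n / fact n)"
    by (rule suminf_le[OF _ sa Msumm]) (use itk_bound1 p in auto)
  also have "\<dots> = B * exp B" using Msums by (rule sums_unique[symmetric])
  finally show ?thesis .
qed

lemma res_cont: "continuous_on Tri res"
proof -
  have ul: "uniform_limit Tri (\<lambda>n p. \<Sum>i<n. itk k i p) (\<lambda>p. \<Sum>i. itk k i p) sequentially"
    by (rule Weierstrass_m_test[OF _ Msumm]) (use itk_bound1 in auto)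
  have "continuous_on Tri (\<lambda>p. \<Sum>i. itk k i p)"
    by (rule uniform_limit_theorem[OF _ ul]) (auto intro!: always_eventually continuous_on_sum itk_cont)
  then show ?thesis unfolding res_def[abs_def] .
qed

lemma res_eq:
  assumes xy: "(x,y) \<in> Tri"
  shows "res (x,y) = k (x,y) + integral {y..x} (\<lambda>s. k (x,s) * res (s,y))"
proof -
  have T: "0 \<le> y" "y \<le> x" "x \<le> 1" using xy by (auto simp: Tri_def)
  have sT: "s \<in> {y..x} \<Longrightarrow> (x,s) \<in> Tri \<and> (s,y) \<in> Tri" for s using T by (auto simp: Tri_def)
  let ?f = "\<lambda>i s. k (x,s) * itk k i (s,y)"
  have ul: "uniform_limit (cbox y x) (\<lambda>n s. \<Sum>i<n. ?f i s) (\<lambda>s. \<Sum>i. ?f i s) sequentially"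
  proof (rule Weierstrass_m_test[OF _ summable_mult[OF Msumm, of B]])
    fix i s assume s: "s \<in> cbox y x"
    then have "\<bar>k (x,s)\<bar> \<le> B" "\<bar>itk k i (s,y)\<bar> \<le> B ^ Suc i / fact i"
      using sT kB itk_bound1 by auto
    then have "\<bar>k (x,s)\<bar> * \<bar>itk k i (s,y)\<bar> \<le> B * (B ^ Suc i / fact i)"
      by (intro mult_mono) (auto simp: B_nonneg)
    then show "norm (?f i s) \<le> B * (B ^ Suc i / fact i)"
      by (simp only: real_norm_def abs_mult)
  qed
  have ck1: "continuous_on {y..x} (\<lambda>s. k (x,s))"
    by (rule continuous_on_compose2[OF ck]) (use sT in \<open>auto intro!: continuous_intros\<close>)
  have ci: "continuous_on {y..x} (\<lambda>s. itk k i (s,y))" for i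
    by (rule continuous_on_compose2[OF itk_cont]) (use sT in \<open>auto intro!: continuous_intros\<close>)
  have cfn: "continuous_on (cbox y x) (\<lambda>s. \<Sum>i<n. ?f i s)" for n
    unfolding cbox_interval by (intro continuous_on_sum continuous_intros ck1 ci)
  obtain I J where I: "\<And>n. ((\<lambda>s. \<Sum>i<n. ?f i s) has_integral I n) (cbox y x)"
    and J: "((\<lambda>s. \<Sum>i. ?f i s) has_integral J) (cbox y x)" and IJ: "I \<longlonglongrightarrow> J"
    by (rule uniform_limit_integral_cbox[OF ul cfn]) auto
  have In: "I n = (\<Sum>i<n. itk k (Suc i) (x,y))" for n
  proof -
    have "((\<lambda>s. \<Sum>i<n. ?f i s) has_integral (\<Sum>i<n. integral {y..x} (?f i))) {y..x}"
      by (intro has_integral_sum finite_lessThan integrable_integral integrable_continuous_real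
          continuous_intros ck1 ci)
    then show ?thesis using I[of n] by (simp add: cbox_interval has_integral_unique)
  qed
  have Jv: "J = integral {y..x} (\<lambda>s. k (x,s) * res (s,y))"
  proof -
    have "integral (cbox y x) (\<lambda>s. \<Sum>i. ?f i s) = integral (cbox y x) (\<lambda>s. k (x,s) * res (s,y))"
      by (rule integral_cong) (simp add: res_def suminf_mult res_summable sT cbox_interval)
    then show ?thesis using integral_unique[OF J] by (simp add: cbox_interval)
  qed
  have s1: "(\<lambda>n. \<Sum>i<n. itk k (Suc i) (x,y)) \<longlonglongrightarrow> (\<Sum>i. itk k (Suc i) (x,y))"
    using summable_Suc_iff[of "\<lambda>n. itk k n (x,y)"] res_summable[OF xy]
    by (intro summable_LIMSEQ) (simp del: itk.simps(2))
  have "(\<Sum>i. itk k (Suc i) (x,y)) = res (x,y) - k (x,y)"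
    unfolding res_def using suminf_split_head[OF res_summable[OF xy]] by (simp del: itk.simps(2))
  moreover have "J = (\<Sum>i. itk k (Suc i) (x,y))"
  proof -
    have "I = (\<lambda>n. \<Sum>i<n. itk k (Suc i) (x,y))" using In by (intro ext)
    then have "I \<longlonglongrightarrow> (\<Sum>i. itk k (Suc i) (x,y))" using s1 by (simp only:)
    then show ?thesis using LIMSEQ_unique[OF IJ] by blast
  qed
  ultimately show ?thesis using Jv by simp
qed
end

lemma pow_fact_lim: "(\<lambda>n. C * a ^ n / fact n :: real) \<longlonglongrightarrow> 0"
proof -
  have "(\<lambda>n. a ^ n /\<^sub>R fact n :: real) \<longlonglongrightarrow> 0"
    by (rule summable_LIMSEQ_zero[OF summable_exp_generic])
  then have "(\<lambda>n. C * (a ^ n /\<^sub>R fact n) :: real) \<longlonglongrightarrow> C * 0"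
    by (intro tendsto_mult tendsto_const)
  then show ?thesis by (simp add: divide_inverse mult_ac)
qed

lemma cont_int0:
  fixes a :: "real \<times> real \<Rightarrow> real" and w :: "real \<Rightarrow> real"
  assumes ca: "continuous_on Tri a" and cw: "continuous_on {0..1} w"
  shows "continuous_on {0..1} (\<lambda>x. integral {0..x} (\<lambda>y. a (x,y) * w y))"
proof (rule cont_var_integral[where a=0 and b=1 and lo="\<lambda>_. 0" and hi="\<lambda>x. x" and G="\<lambda>x y. a (x,y) * w y"])
  let ?S = "{(p, s). p \<in> {0..1} \<and> 0 \<le> s \<and> s \<le> p}"
  have 1: "continuous_on ?S (\<lambda>q. a (fst q, snd q))"
    by (rule continuous_on_compose2[OF ca]) (auto intro!: continuous_intros simp: Tri_def)
  have 2: "continuous_on ?S (\<lambda>q. w (snd q))"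
    by (rule continuous_on_compose2[OF cw]) (auto intro!: continuous_intros)
  show "continuous_on ?S (\<lambda>(p, s). a (p, s) * w s)"
    using continuous_on_mult[OF 1 2] by (simp add: case_prod_beta)
qed (auto intro!: continuous_intros)

lemma cont_sec1:
  fixes a :: "real \<times> real \<Rightarrow> real"
  assumes ca: "continuous_on Tri a" and x: "x \<in> {0..1}"
  shows "continuous_on {0..x} (\<lambda>y. a (x,y))"
  by (rule continuous_on_compose2[OF ca]) (use x in \<open>auto intro!: continuous_intros simp: Tri_def\<close>)

lemma cont_sec2:
  fixes a :: "real \<times> real \<Rightarrow> real"
  assumes ca: "continuous_on Tri a" and y: "y \<in> {0..1}"
  shows "continuous_on {y..1} (\<lambda>x. a (x,y))"
  by (rule continuous_on_compose2[OF ca]) (use y in \<open>auto intro!: continuous_intros simp: Tri_def\<close>)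

context vkern
begin

lemma res_apply:
  assumes cw: "continuous_on {0..1} w" and x: "x \<in> {0..1}"
  shows "w x + integral {0..x} (\<lambda>y. res (x,y) * w y) =
         w x + integral {0..x} (\<lambda>y. k (x,y) * (w y + integral {0..y} (\<lambda>s. res (y,s) * w s)))"
proof -
  have x01: "0 \<le> x" "x \<le> 1" using x by auto
  have cwx: "continuous_on {0..x} w" by (rule continuous_on_subset[OF cw]) (use x in auto)
  have ckx: "continuous_on {0..x} (\<lambda>y. k (x,y))" by (rule cont_sec1[OF ck x])
  have crx: "continuous_on {0..x} (\<lambda>y. res (x,y))" by (rule cont_sec1[OF res_cont x])
  have cV: "continuous_on {0..x} (\<lambda>y. integral {0..y} (\<lambda>s. res (y,s) * w s))"
    by (rule continuous_on_subset[OF cont_int0[OF res_cont cw]]) (use x in auto)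
  have "integral {0..x} (\<lambda>y. k (x,y) * (w y + integral {0..y} (\<lambda>s. res (y,s) * w s)))
      = integral {0..x} (\<lambda>y. k (x,y) * w y) + integral {0..x} (\<lambda>y. k (x,y) * integral {0..y} (\<lambda>s. res (y,s) * w s))"
    by (subst integral_add[symmetric]) (auto simp: distrib_left intro!: integrable_continuous_real continuous_intros ckx cwx cV)
  also have "integral {0..x} (\<lambda>y. k (x,y) * integral {0..y} (\<lambda>s. res (y,s) * w s))
      = integral {0..x} (\<lambda>y. integral {0..y} (\<lambda>s. k (x,y) * res (y,s) * w s))"
    by (rule integral_cong) (simp add: mult.assoc)
  also have "\<dots> = integral {0..x} (\<lambda>s. integral {s..x} (\<lambda>y. k (x,y) * res (y,s) * w s))"
  proof (rule tri_fubini[OF x01(1)])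
    let ?S = "{(y, s). 0 \<le> s \<and> s \<le> y \<and> y \<le> x}"
    have 1: "continuous_on ?S (\<lambda>q. k (x, fst q))"
      by (rule continuous_on_compose2[OF ck]) (use x in \<open>auto intro!: continuous_intros simp: Tri_def\<close>)
    have 2: "continuous_on ?S (\<lambda>q. res (fst q, snd q))"
      by (rule continuous_on_compose2[OF res_cont]) (use x in \<open>auto intro!: continuous_intros simp: Tri_def\<close>)
    have 3: "continuous_on ?S (\<lambda>q. w (snd q))"
      by (rule continuous_on_compose2[OF cw]) (use x in \<open>auto intro!: continuous_intros\<close>)
    show "continuous_on ?S (\<lambda>(y, s). k (x, y) * res (y, s) * w s)"
      using continuous_on_mult[OF continuous_on_mult[OF 1 2] 3] by (simp add: case_prod_beta)
  qed
  also have "\<dots> = integral {0..x} (\<lambda>s. (res (x,s) - k (x,s)) * w s)"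
  proof (rule integral_cong)
    fix s assume s: "s \<in> {0..x}"
    have "integral {s..x} (\<lambda>y. k (x,y) * res (y,s) * w s) = integral {s..x} (\<lambda>y. k (x,y) * res (y,s)) * w s"
      by (rule integral_mult_left)
    also have "integral {s..x} (\<lambda>y. k (x,y) * res (y,s)) = res (x,s) - k (x,s)"
      using res_eq[of x s] s x by (auto simp: Tri_def)
    finally show "integral {s..x} (\<lambda>y. k (x,y) * res (y,s) * w s) = (res (x,s) - k (x,s)) * w s" .
  qed
  finally have "integral {0..x} (\<lambda>y. k (x,y) * (w y + integral {0..y} (\<lambda>s. res (y,s) * w s)))
      = integral {0..x} (\<lambda>y. k (x,y) * w y) + integral {0..x} (\<lambda>s. (res (x,s) - k (x,s)) * w s)" .
  also have "\<dots> = integral {0..x} (\<lambda>y. res (x,y) * w y)"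
    by (subst integral_add[symmetric]) (auto simp: algebra_simps intro!: integrable_continuous_real continuous_intros ckx cwx crx)
  finally show ?thesis by simp
qed

lemma volterra_inj:
  assumes cR: "continuous_on {0..1} R"
    and eq: "\<And>x. x \<in> {0..1} \<Longrightarrow> R x = integral {0..x} (\<lambda>y. k (x,y) * R y)"
    and x: "x \<in> {0..1}"
  shows "R x = 0"
proof -
  obtain C where C: "\<And>x. x \<in> {0..1} \<Longrightarrow> \<bar>R x\<bar> \<le> C"
    using compact_imp_bounded[OF compact_continuous_image[OF cR compact_Icc]]
    by (auto simp: bounded_iff) (metis atLeastAtMost_iff)
  have ind: "\<And>x. x \<in> {0..1} \<Longrightarrow> \<bar>R x\<bar> \<le> C * (B ^ n * x ^ n) / fact n" for n
  proof (induction n)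
    case 0 then show ?case using C by simp
  next
    case (Suc n)
    fix x :: real assume x: "x \<in> {0..1}"
    have cRx: "continuous_on {0..x} R" by (rule continuous_on_subset[OF cR]) (use x in auto)
    have "\<bar>R x\<bar> = \<bar>integral {0..x} (\<lambda>y. k (x,y) * R y)\<bar>" using eq[OF x] by simp
    also have "\<dots> \<le> integral {0..x} (\<lambda>y. B * (C * (B ^ n * y ^ n) / fact n))"
    proof (rule abs_integral_le)
      show "(\<lambda>y. k (x,y) * R y) integrable_on {0..x}"
        by (intro integrable_continuous_real continuous_intros cont_sec1[OF ck x] cRx)
      show "(\<lambda>y. B * (C * (B ^ n * y ^ n) / fact n)) integrable_on {0..x}"
        by (intro integrable_continuous_real continuous_intros) auto
      fix y assume y: "y \<in> {0..x}"
      have "\<bar>k (x,y)\<bar> \<le> B" using kB y x by (auto simp: Tri_def)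
      moreover have "\<bar>R y\<bar> \<le> C * (B ^ n * y ^ n) / fact n" using Suc.IH y x by auto
      ultimately have "\<bar>k (x,y)\<bar> * \<bar>R y\<bar> \<le> B * (C * (B ^ n * y ^ n) / fact n)"
        by (intro mult_mono) (auto simp: B_nonneg)
      then show "\<bar>k (x,y) * R y\<bar> \<le> B * (C * (B ^ n * y ^ n) / fact n)"
        by (simp only: abs_mult)
    qed
    also have "\<dots> = (B * C * B ^ n / fact n) * integral {0..x} (\<lambda>y. (y - 0) ^ n)"
    proof -
      have "integral {0..x} (\<lambda>y. B * (C * (B ^ n * y ^ n) / fact n)) =
            integral {0..x} (\<lambda>y. (B * C * B ^ n / fact n) * (y - 0) ^ n)"
        by (rule integral_cong) (simp add: divide_inverse mult_ac)
      also have "\<dots> = (B * C * B ^ n / fact n) * integral {0..x} (\<lambda>y. (y - 0) ^ n)"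
        by (rule integral_mult_right)
      finally show ?thesis .
    qed
    also have "\<dots> = (B * C * B ^ n / fact n) * ((x - 0) ^ Suc n / real (Suc n))"
      using x integral_pow_shift[of 0 x n] by simp
    also have "\<dots> = C * (B ^ Suc n * x ^ Suc n) / fact (Suc n)"
      by (simp add: field_simps)
    finally show "\<bar>R x\<bar> \<le> C * (B ^ Suc n * x ^ Suc n) / fact (Suc n)" .
  qed
  have lim: "(\<lambda>n. C * (B * x) ^ n / fact n) \<longlonglongrightarrow> 0" by (rule pow_fact_lim)
  have "\<bar>R x\<bar> \<le> 0"
    by (rule LIMSEQ_le_const[OF lim]) (use ind[OF x] in \<open>auto simp: power_mult_distrib\<close>)
  then show ?thesis by simp
qed

end

lemma bl_pair:
  fixes L :: "real \<times> real \<Rightarrow> real"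
  assumes "bounded_linear L"
  shows "L (u, v) = u * L (1,0) + v * L (0,1)"
proof -
  have lin: "linear L" using assms by (rule bounded_linear.linear)
  have "L (u,v) = L (u *\<^sub>R (1,0) + v *\<^sub>R (0,1))" by simp
  also have "\<dots> = L (u *\<^sub>R (1,0)) + L (v *\<^sub>R (0,1))" by (rule linear_add[OF lin])
  also have "\<dots> = u *\<^sub>R L (1,0) + v *\<^sub>R L (0,1)" by (simp only: linear_scale[OF lin])
  finally show ?thesis by simp
qed

lemma C1_path:
  fixes h :: "real \<times> real \<Rightarrow> real"
  assumes C1: "C1_with h h' S"
    and g: "(\<gamma> has_derivative (\<lambda>t. (t * da, t * db))) (at s within I)"
    and sub: "\<gamma> ` I \<subseteq> S" and s: "s \<in> I"
  shows "((\<lambda>s. h (\<gamma> s)) has_real_derivative (da * h' (\<gamma> s) (1,0) + db * h' (\<gamma> s) (0,1))) (at s within I)"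
proof -
  have hd: "\<And>p. p \<in> S \<Longrightarrow> (h has_derivative h' p) (at p within S)"
    using C1 by (auto simp: C1_with_def)
  have d: "((\<lambda>s. h (\<gamma> s)) has_derivative (\<lambda>t. h' (\<gamma> s) (t * da, t * db))) (at s within I)"
    by (rule has_derivative_in_compose2[OF hd sub s g])
  have gS: "\<gamma> s \<in> S" using sub s by auto
  have bl: "bounded_linear (h' (\<gamma> s))"
    using hd[OF gS] by (rule has_derivative_bounded_linear)
  have "(\<lambda>t. h' (\<gamma> s) (t * da, t * db)) = (\<lambda>t. (da * h' (\<gamma> s) (1,0) + db * h' (\<gamma> s) (0,1)) * t)"
  proof (rule ext)
    fix t
    show "h' (\<gamma> s) (t * da, t * db) = (da * h' (\<gamma> s) (1,0) + db * h' (\<gamma> s) (0,1)) * t"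
      using bl_pair[OF bl, of "t * da" "t * db"] by (simp only: algebra_simps)
  qed
  then show ?thesis using d unfolding has_field_derivative_def by (simp only:)
qed

lemma C1_cont:
  assumes "C1_with h h' S" shows "continuous_on S h"
  using assms unfolding C1_with_def continuous_on_eq_continuous_within
  by (auto intro: has_derivative_continuous)

lemma C1_dx:
  assumes "C1_with h h' S" "\<And>\<xi>. \<xi> \<in> I \<Longrightarrow> (\<xi>, y) \<in> S" "x \<in> I"
  shows "((\<lambda>\<xi>. h (\<xi>, y)) has_real_derivative h' (x, y) (1,0)) (at x within I)"
proof -
  have g: "((\<lambda>\<xi>. (\<xi>, y)) has_derivative (\<lambda>t. (t * 1, t * 0))) (at x within I)"
    by (auto intro!: derivative_eq_intros)
  have sub: "(\<lambda>\<xi>. (\<xi>, y)) ` I \<subseteq> S" using assms(2) by auto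
  show ?thesis using C1_path[OF assms(1) g sub assms(3)] by simp
qed

lemma C1_dy:
  assumes "C1_with h h' S" "\<And>\<eta>. \<eta> \<in> I \<Longrightarrow> (x, \<eta>) \<in> S" "y \<in> I"
  shows "((\<lambda>\<eta>. h (x, \<eta>)) has_real_derivative h' (x, y) (0,1)) (at y within I)"
proof -
  have g: "((\<lambda>\<eta>. (x, \<eta>)) has_derivative (\<lambda>t. (t * 0, t * 1))) (at y within I)"
    by (auto intro!: derivative_eq_intros)
  have sub: "(\<lambda>\<eta>. (x, \<eta>)) ` I \<subseteq> S" using assms(2) by auto
  show ?thesis using C1_path[OF assms(1) g sub assms(3)] by simp
qed

lemma C1_diag:
  assumes "C1_with h h' S" "\<And>s. s \<in> I \<Longrightarrow> (x + s, y + s) \<in> S" "s \<in> I"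
  shows "((\<lambda>s. h (x + s, y + s)) has_real_derivative (h' (x + s, y + s) (1,0) + h' (x + s, y + s) (0,1))) (at s within I)"
proof -
  have g: "((\<lambda>s. (x + s, y + s)) has_derivative (\<lambda>t. (t * 1, t * 1))) (at s within I)"
    by (auto intro!: derivative_eq_intros)
  have sub: "(\<lambda>s. (x + s, y + s)) ` I \<subseteq> S" using assms(2) by auto
  show ?thesis using C1_path[OF assms(1) g sub assms(3)] by simp
qed

lemma compact_Tri: "compact Tri"
proof -
  have eq: "Tri = {p. 0 \<le> snd p} \<inter> {p. snd p \<le> fst p} \<inter> {p. fst p \<le> (1::real)}"
    by (auto simp: Tri_def)
  have "closed ({p. 0 \<le> snd p} \<inter> {p. snd p \<le> fst p} \<inter> {p. fst p \<le> (1::real)})"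
    by (intro closed_Int; rule closed_Collect_le; intro continuous_intros)
  then have "closed Tri" by (simp only: eq)
  moreover have "bounded Tri"
    by (rule bounded_subset[OF bounded_cbox[of "(0,0)" "(1,1)"]]) (force simp: Tri_def cbox_Pair_eq)
  ultimately show ?thesis using compact_eq_bounded_closed by blast
qed

lemma bounded_on_Tri:
  fixes h :: "real \<times> real \<Rightarrow> real"
  assumes "continuous_on Tri h" obtains C where "\<And>p. p \<in> Tri \<Longrightarrow> \<bar>h p\<bar> \<le> C"
  using compact_imp_bounded[OF compact_continuous_image[OF assms compact_Tri]]
  by (auto simp: bounded_iff)

lemma G_step:
  fixes Mf c r :: real
  assumes r: "0 \<le> r"
  shows "integral {0..r} (\<lambda>s. Mf + Mf * ((exp (Mf * (r - s)) - 1) + c * (r - s) ^ n))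
       = (exp (Mf * r) - 1) + Mf * c * r ^ Suc n / real (Suc n)"
proof -
  let ?P = "\<lambda>s. - exp (Mf * (r - s)) - Mf * c * (r - s) ^ Suc n / real (Suc n)"
  have "((\<lambda>s. Mf + Mf * ((exp (Mf * (r - s)) - 1) + c * (r - s) ^ n)) has_integral (?P r - ?P 0)) {0..r}"
  proof (rule fundamental_theorem_of_calculus[OF r])
    fix s assume "s \<in> {0..r}"
    have "(?P has_real_derivative (- (exp (Mf * (r - s)) * (Mf * (0 - 1))) -
            Mf * c * (real (Suc n) * (r - s) ^ n * (0 - 1)) / real (Suc n))) (at s within {0..r})"
      by (rule derivative_eq_intros refl | simp del: of_nat_Suc)+
    then show "(?P has_vector_derivative (Mf + Mf * ((exp (Mf * (r - s)) - 1) + c * (r - s) ^ n))) (at s within {0..r})"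
      by (simp add: has_real_derivative_iff_has_vector_derivative algebra_simps del: of_nat_Suc)
  qed
  then show ?thesis by (simp add: integral_unique)
qed

locale kbnd =
  fixes f k :: "real \<times> real \<Rightarrow> real" and k' :: "real \<times> real \<Rightarrow> real \<times> real \<Rightarrow> real" and Mf :: real
  assumes cf: "continuous_on Tri f"
    and fM: "\<And>p. p \<in> Tri \<Longrightarrow> \<bar>f p\<bar> \<le> Mf"
    and kC1: "C1_with k k' Tri"
    and kpde: "\<forall>x y. (x, y) \<in> Tri \<longrightarrow>
        k' (x, y) (0, 1) + k' (x, y) (1, 0)
          = f (x, y) - integral {y..x} (\<lambda>\<eta>. f (x, \<eta>) * k (\<eta>, y))"
    and kbc: "\<forall>y\<in>{0..1}. k (1, y) = 0"
begin

lemma Mf_nonneg: "0 \<le> Mf" using fM[of "(0,0)"] by (auto simp: Tri_def)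

lemma ck: "continuous_on Tri k" using C1_cont[OF kC1] .

definition F :: "real \<times> real \<Rightarrow> real" where "F p = k' p (1,0) + k' p (0,1)"

lemma cF: "continuous_on Tri F"
  using kC1 unfolding F_def[abs_def] C1_with_def by (auto intro!: continuous_intros)

lemma char_rep:
  assumes xy: "(x,y) \<in> Tri"
  shows "k (x,y) = - integral {0..1-x} (\<lambda>s. F (x + s, y + s))"
proof -
  have T: "0 \<le> y" "y \<le> x" "x \<le> 1" using xy by (auto simp: Tri_def)
  have inT: "\<And>s. s \<in> {0..1-x} \<Longrightarrow> (x + s, y + s) \<in> Tri" using T by (auto simp: Tri_def)
  have "((\<lambda>s. F (x + s, y + s)) has_integral (k (x + (1-x), y + (1-x)) - k (x + 0, y + 0))) {0..1-x}"
  proof (rule fundamental_theorem_of_calculus)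
    show "0 \<le> 1 - x" using T by simp
    fix s assume s: "s \<in> {0..1-x}"
    show "((\<lambda>s. k (x + s, y + s)) has_vector_derivative F (x + s, y + s)) (at s within {0..1-x})"
      using C1_diag[OF kC1 inT s] by (simp add: F_def has_real_derivative_iff_has_vector_derivative)
  qed
  moreover have "k (x + (1-x), y + (1-x)) = 0" using kbc T by auto
  ultimately show ?thesis by (simp add: integral_unique)
qed

lemma F_eq: "p \<in> Tri \<Longrightarrow> F p = f p - integral {snd p..fst p} (\<lambda>\<eta>. f (fst p, \<eta>) * k (\<eta>, snd p))"
  using kpde by (cases p) (auto simp: F_def add.commute)

lemma step:
  assumes hk: "\<And>a b. (a,b) \<in> Tri \<Longrightarrow> \<bar>k (a,b)\<bar> \<le> g (1 - b)"
    and cg: "continuous_on {0..1} g" and g0: "\<And>r. r \<in> {0..1} \<Longrightarrow> 0 \<le> g r"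
    and xy: "(x,y) \<in> Tri"
  shows "\<bar>k (x,y)\<bar> \<le> integral {0..1-y} (\<lambda>s. Mf + Mf * g (1 - y - s))"
proof -
  have T: "0 \<le> y" "y \<le> x" "x \<le> 1" using xy by (auto simp: Tri_def)
  have Fb: "\<bar>F (a,b)\<bar> \<le> Mf + Mf * g (1 - b)" if ab: "(a,b) \<in> Tri" for a b
  proof -
    have Tab: "0 \<le> b" "b \<le> a" "a \<le> 1" using ab by (auto simp: Tri_def)
    have c1: "continuous_on {b..a} (\<lambda>\<eta>. f (a, \<eta>))"
      by (rule continuous_on_compose2[OF cf]) (use Tab in \<open>auto intro!: continuous_intros simp: Tri_def\<close>)
    have c2: "continuous_on {b..a} (\<lambda>\<eta>. k (\<eta>, b))"
      by (rule continuous_on_compose2[OF ck]) (use Tab in \<open>auto intro!: continuous_intros simp: Tri_def\<close>)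
    have "\<bar>integral {b..a} (\<lambda>\<eta>. f (a, \<eta>) * k (\<eta>, b))\<bar> \<le> integral {b..a} (\<lambda>\<eta>. Mf * g (1 - b))"
    proof (rule abs_integral_le)
      show "(\<lambda>\<eta>. f (a, \<eta>) * k (\<eta>, b)) integrable_on {b..a}"
        by (intro integrable_continuous_real continuous_intros c1 c2)
      show "(\<lambda>\<eta>. Mf * g (1 - b)) integrable_on {b..a}" by (rule integrable_continuous_real) (rule continuous_on_const)
      fix \<eta> assume e: "\<eta> \<in> {b..a}"
      have "\<bar>f (a,\<eta>)\<bar> \<le> Mf" using fM e Tab by (auto simp: Tri_def)
      moreover have "\<bar>k (\<eta>,b)\<bar> \<le> g (1 - b)" using hk e Tab by (auto simp: Tri_def)
      ultimately have "\<bar>f (a,\<eta>)\<bar> * \<bar>k (\<eta>,b)\<bar> \<le> Mf * g (1 - b)"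
        by (intro mult_mono) (auto simp: Mf_nonneg)
      then show "\<bar>f (a, \<eta>) * k (\<eta>, b)\<bar> \<le> Mf * g (1 - b)" by (simp only: abs_mult)
    qed
    also have "\<dots> = (a - b) * (Mf * g (1 - b))" using Tab by simp
    also have "\<dots> \<le> 1 * (Mf * g (1 - b))"
      by (rule mult_right_mono) (use Tab g0[of "1-b"] Mf_nonneg in auto)
    finally have I: "\<bar>integral {b..a} (\<lambda>\<eta>. f (a, \<eta>) * k (\<eta>, b))\<bar> \<le> Mf * g (1 - b)" by simp
    have "\<bar>F (a,b)\<bar> \<le> \<bar>f (a,b)\<bar> + \<bar>integral {b..a} (\<lambda>\<eta>. f (a, \<eta>) * k (\<eta>, b))\<bar>"
      using F_eq[OF ab] by simp
    then show ?thesis using I fM[OF ab] by simp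
  qed
  have cint: "continuous_on {0..1-y} (\<lambda>s. Mf + Mf * g (1 - y - s))"
    by (intro continuous_intros continuous_on_compose2[OF cg]) (use T in auto)
  have cFd: "continuous_on {0..1-x} (\<lambda>s. F (x + s, y + s))"
    by (rule continuous_on_compose2[OF cF]) (use T in \<open>auto intro!: continuous_intros simp: Tri_def\<close>)
  have "\<bar>k (x,y)\<bar> = \<bar>integral {0..1-x} (\<lambda>s. F (x + s, y + s))\<bar>" using char_rep[OF xy] by simp
  also have "\<dots> \<le> integral {0..1-x} (\<lambda>s. Mf + Mf * g (1 - y - s))"
  proof (rule abs_integral_le)
    show "(\<lambda>s. F (x + s, y + s)) integrable_on {0..1-x}" by (rule integrable_continuous_real[OF cFd])
    show "(\<lambda>s. Mf + Mf * g (1 - y - s)) integrable_on {0..1-x}"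
      by (rule integrable_continuous_real, rule continuous_on_subset[OF cint]) (use T in auto)
    fix s assume s: "s \<in> {0..1-x}"
    have "(x + s, y + s) \<in> Tri" using s T by (auto simp: Tri_def)
    from Fb[OF this] show "\<bar>F (x + s, y + s)\<bar> \<le> Mf + Mf * g (1 - y - s)" by (simp add: algebra_simps)
  qed
  also have "\<dots> \<le> integral {0..1-y} (\<lambda>s. Mf + Mf * g (1 - y - s))"
  proof -
    have i: "(\<lambda>s. Mf + Mf * g (1 - y - s)) integrable_on {0..1-y}" by (rule integrable_continuous_real[OF cint])
    have "integral {0..1-x} (\<lambda>s. Mf + Mf * g (1 - y - s)) + integral {1-x..1-y} (\<lambda>s. Mf + Mf * g (1 - y - s))
          = integral {0..1-y} (\<lambda>s. Mf + Mf * g (1 - y - s))"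
      by (rule Henstock_Kurzweil_Integration.integral_combine[OF _ _ i]) (use T in auto)
    moreover have "0 \<le> integral {1-x..1-y} (\<lambda>s. Mf + Mf * g (1 - y - s))"
    proof (rule integral_nonneg)
      show "(\<lambda>s. Mf + Mf * g (1 - y - s)) integrable_on {1-x..1-y}"
        by (rule integrable_continuous_real, rule continuous_on_subset[OF cint]) (use T in auto)
      fix s assume "s \<in> {1-x..1-y}"
      then have "0 \<le> g (1 - y - s)" using g0 T by auto
      then show "0 \<le> Mf + Mf * g (1 - y - s)" using Mf_nonneg by simp
    qed
    ultimately show ?thesis by linarith
  qed
  finally show ?thesis .
qed

lemma kbound_n:
  obtains B0 where "\<And>n x y. (x,y) \<in> Tri \<Longrightarrow>
     \<bar>k (x,y)\<bar> \<le> (exp (Mf * (1 - y)) - 1) + B0 * Mf ^ n * (1 - y) ^ n / fact n"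
proof -
  obtain B0 where B0: "\<And>p. p \<in> Tri \<Longrightarrow> \<bar>k p\<bar> \<le> B0" using bounded_on_Tri[OF ck] by blast
  have B00: "0 \<le> B0" using B0[of "(0,0)"] by (auto simp: Tri_def)
  have "(x,y) \<in> Tri \<Longrightarrow> \<bar>k (x,y)\<bar> \<le> (exp (Mf * (1 - y)) - 1) + B0 * Mf ^ n * (1 - y) ^ n / fact n" for n x y
  proof (induction n arbitrary: x y)
    case 0
    have "1 \<le> exp (Mf * (1 - y))" using 0 Mf_nonneg by (auto simp: Tri_def)
    then show ?case using B0[OF 0] by (simp del: one_le_exp_iff)
  next
    case (Suc n)
    let ?c = "B0 * Mf ^ n / fact n"
    let ?g = "\<lambda>r. (exp (Mf * r) - 1) + ?c * r ^ n"
    have hk: "\<And>a b. (a,b) \<in> Tri \<Longrightarrow> \<bar>k (a,b)\<bar> \<le> ?g (1 - b)"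
      using Suc.IH by (simp add: mult.assoc)
    have cg: "continuous_on {0..1} ?g" by (intro continuous_intros)
    have g0: "0 \<le> ?g r" if "r \<in> {0..1}" for r
    proof -
      have "1 \<le> exp (Mf * r)" using that Mf_nonneg by auto
      moreover have "0 \<le> ?c * r ^ n" using that B00 Mf_nonneg by auto
      ultimately show ?thesis by simp
    qed
    have y: "0 \<le> 1 - y" using Suc.prems by (auto simp: Tri_def)
    have "\<bar>k (x,y)\<bar> \<le> integral {0..1-y} (\<lambda>s. Mf + Mf * ?g (1 - y - s))"
      by (rule step[OF hk cg g0 Suc.prems])
    also have "\<dots> = (exp (Mf * (1-y)) - 1) + Mf * ?c * (1-y) ^ Suc n / real (Suc n)"
      using G_step[OF y, of Mf ?c n] by (simp add: algebra_simps)
    also have "\<dots> = (exp (Mf * (1 - y)) - 1) + B0 * Mf ^ Suc n * (1 - y) ^ Suc n / fact (Suc n)"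
      by (simp add: field_simps)
    finally show ?case .
  qed
  then show ?thesis using that by blast
qed

lemma kbound: "p \<in> Tri \<Longrightarrow> \<bar>k p\<bar> \<le> exp Mf - 1"
proof -
  assume p: "p \<in> Tri"
  obtain x y where xy: "p = (x,y)" by (cases p)
  obtain B0 where B0: "\<And>n x y. (x,y) \<in> Tri \<Longrightarrow>
     \<bar>k (x,y)\<bar> \<le> (exp (Mf * (1 - y)) - 1) + B0 * Mf ^ n * (1 - y) ^ n / fact n"
    using kbound_n by blast
  have T: "0 \<le> y" "y \<le> 1" using p xy by (auto simp: Tri_def)
  have lim: "(\<lambda>n. (exp (Mf * (1 - y)) - 1) + B0 * (Mf * (1 - y)) ^ n / fact n) \<longlonglongrightarrow> (exp (Mf * (1 - y)) - 1) + 0"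
    by (intro tendsto_add tendsto_const pow_fact_lim)
  have "\<bar>k (x,y)\<bar> \<le> exp (Mf * (1 - y)) - 1"
    using LIMSEQ_le_const[OF lim, of "\<bar>k (x,y)\<bar>"] B0 p xy by (simp add: power_mult_distrib mult.assoc)
  also have "\<dots> \<le> exp Mf - 1"
    using T Mf_nonneg by (simp add: mult_left_le)
  finally show ?thesis using xy by simp
qed

end

lemma cauchy_schwarz_int:
  fixes a b :: "real \<Rightarrow> real"
  assumes ca: "continuous_on {l..h} a" and cb: "continuous_on {l..h} b"
  shows "(integral {l..h} (\<lambda>x. a x * b x))\<^sup>2 \<le> integral {l..h} (\<lambda>x. (a x)\<^sup>2) * integral {l..h} (\<lambda>x. (b x)\<^sup>2)"
proof -
  let ?A = "integral {l..h} (\<lambda>x. (a x)\<^sup>2)"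
  let ?C = "integral {l..h} (\<lambda>x. a x * b x)"
  let ?D = "integral {l..h} (\<lambda>x. (b x)\<^sup>2)"
  have ia: "(\<lambda>x. (a x)\<^sup>2) integrable_on {l..h}" by (intro integrable_continuous_real continuous_intros ca)
  have ib: "(\<lambda>x. (b x)\<^sup>2) integrable_on {l..h}" by (intro integrable_continuous_real continuous_intros cb)
  have iab: "(\<lambda>x. a x * b x) integrable_on {l..h}" by (intro integrable_continuous_real continuous_intros ca cb)
  have key: "0 \<le> ?A - 2 * t * ?C + t\<^sup>2 * ?D" for t
  proof -
    have "0 \<le> integral {l..h} (\<lambda>x. (a x - t * b x)\<^sup>2)"
      by (rule integral_nonneg) (auto intro!: integrable_continuous_real continuous_intros ca cb)
    also have "integral {l..h} (\<lambda>x. (a x - t * b x)\<^sup>2) =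
       integral {l..h} (\<lambda>x. (a x)\<^sup>2 - (2 * t) * (a x * b x) + t\<^sup>2 * (b x)\<^sup>2)"
      by (rule integral_cong) (simp add: power2_eq_square algebra_simps)
    also have "\<dots> = ?A - 2 * t * ?C + t\<^sup>2 * ?D"
      by (intro integral_unique has_integral_add has_integral_diff has_integral_mult_right integrable_integral ia ib iab)
    finally show ?thesis .
  qed
  have D0: "0 \<le> ?D" by (rule integral_nonneg[OF ib]) simp
  show ?thesis
  proof (cases "?D = 0")
    case True
    have "?C = 0"
    proof (rule ccontr)
      assume "?C \<noteq> 0"
      have "0 \<le> ?A - 2 * ((?A + 1) / (2 * ?C)) * ?C + ((?A + 1) / (2 * ?C))\<^sup>2 * ?D" by (rule key)
      with True \<open>?C \<noteq> 0\<close> show False by simp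
    qed
    then show ?thesis using True by simp
  next
    case False
    then have Dp: "0 < ?D" using D0 by simp
    have "0 \<le> ?A - 2 * (?C / ?D) * ?C + (?C / ?D)\<^sup>2 * ?D" by (rule key)
    moreover have "(?C / ?D)\<^sup>2 * ?D = ?C\<^sup>2 / ?D" using Dp by (simp add: power2_eq_square)
    moreover have "2 * (?C / ?D) * ?C = 2 * (?C\<^sup>2 / ?D)" by (simp add: power2_eq_square)
    ultimately have "?C\<^sup>2 / ?D \<le> ?A" by linarith
    then show ?thesis using Dp by (simp add: pos_divide_le_eq)
  qed
qed

lemma int_sq_nonneg:
  fixes w :: "real \<Rightarrow> real"
  assumes "continuous_on {l..h} w" shows "0 \<le> integral {l..h} (\<lambda>x. (w x)\<^sup>2)"
  by (rule integral_nonneg) (auto intro!: integrable_continuous_real continuous_intros assms)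

lemma L2_minkowski:
  fixes a b :: "real \<Rightarrow> real"
  assumes ca: "continuous_on {0..1} a" and cb: "continuous_on {0..1} b"
  shows "L2norm (\<lambda>x. a x + b x) \<le> L2norm a + L2norm b"
proof -
  let ?A = "integral {0..1} (\<lambda>x. (a x)\<^sup>2)"
  let ?C = "integral {0..1} (\<lambda>x. a x * b x)"
  let ?D = "integral {0..1} (\<lambda>x. (b x)\<^sup>2)"
  have ia: "(\<lambda>x. (a x)\<^sup>2) integrable_on {0..1}" by (intro integrable_continuous_real continuous_intros ca)
  have ib: "(\<lambda>x. (b x)\<^sup>2) integrable_on {0..1}" by (intro integrable_continuous_real continuous_intros cb)
  have iab: "(\<lambda>x. a x * b x) integrable_on {0..1}" by (intro integrable_continuous_real continuous_intros ca cb)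
  have A0: "0 \<le> ?A" by (rule int_sq_nonneg[OF ca])
  have D0: "0 \<le> ?D" by (rule int_sq_nonneg[OF cb])
  have e: "integral {0..1} (\<lambda>x. (a x + b x)\<^sup>2) = ?A + 2 * ?C + ?D"
  proof -
    have "integral {0..1} (\<lambda>x. (a x + b x)\<^sup>2) = integral {0..1} (\<lambda>x. (a x)\<^sup>2 + 2 * (a x * b x) + (b x)\<^sup>2)"
      by (rule integral_cong) (simp add: power2_eq_square algebra_simps)
    also have "\<dots> = ?A + 2 * ?C + ?D"
      by (intro integral_unique has_integral_add has_integral_mult_right integrable_integral ia ib iab)
    finally show ?thesis .
  qed
  have cs: "?C\<^sup>2 \<le> ?A * ?D" by (rule cauchy_schwarz_int[OF ca cb])
  have C: "?C \<le> sqrt ?A * sqrt ?D"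
  proof -
    have "\<bar>?C\<bar> \<le> sqrt (?A * ?D)" by (rule real_le_rsqrt) (use cs in simp)
    then show ?thesis by (simp add: real_sqrt_mult)
  qed
  have "?A + 2 * ?C + ?D \<le> (sqrt ?A + sqrt ?D)\<^sup>2"
    using C A0 D0 by (simp add: power2_sum)
  then have "sqrt (?A + 2 * ?C + ?D) \<le> sqrt ((sqrt ?A + sqrt ?D)\<^sup>2)"
    by (rule real_sqrt_le_mono)
  also have "\<dots> = sqrt ?A + sqrt ?D" using A0 D0 by simp
  finally have "sqrt (?A + 2 * ?C + ?D) \<le> sqrt ?A + sqrt ?D" .
  then show ?thesis unfolding L2norm_def using e by simp
qed


lemma int_sq_mono:
  fixes w :: "real \<Rightarrow> real"
  assumes cw: "continuous_on {0..1} w" and x: "x \<in> {0..1}"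
  shows "integral {0..x} (\<lambda>y. (w y)\<^sup>2) \<le> integral {0..1} (\<lambda>y. (w y)\<^sup>2)"
proof -
  have i: "(\<lambda>y. (w y)\<^sup>2) integrable_on {0..1}" by (intro integrable_continuous_real continuous_intros cw)
  have "integral {0..x} (\<lambda>y. (w y)\<^sup>2) + integral {x..1} (\<lambda>y. (w y)\<^sup>2) = integral {0..1} (\<lambda>y. (w y)\<^sup>2)"
    by (rule Henstock_Kurzweil_Integration.integral_combine[OF _ _ i]) (use x in auto)
  moreover have "0 \<le> integral {x..1} (\<lambda>y. (w y)\<^sup>2)"
    by (rule int_sq_nonneg, rule continuous_on_subset[OF cw]) (use x in auto)
  ultimately show ?thesis by linarith
qed

lemma volterra_L2:
  fixes kern :: "real \<times> real \<Rightarrow> real" and w :: "real \<Rightarrow> real"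
  assumes ck: "continuous_on Tri kern" and kb: "\<And>p. p \<in> Tri \<Longrightarrow> \<bar>kern p\<bar> \<le> K"
    and cw: "continuous_on {0..1} w"
  shows "L2norm (\<lambda>x. integral {0..x} (\<lambda>y. kern (x,y) * w y)) \<le> K * L2norm w"
proof -
  have K0: "0 \<le> K" using kb[of "(0,0)"] by (auto simp: Tri_def)
  let ?W2 = "integral {0..1} (\<lambda>y. (w y)\<^sup>2)"
  let ?V = "\<lambda>x. integral {0..x} (\<lambda>y. kern (x,y) * w y)"
  have W0: "0 \<le> ?W2" by (rule int_sq_nonneg[OF cw])
  have pt: "(?V x)\<^sup>2 \<le> K\<^sup>2 * ?W2" if x: "x \<in> {0..1}" for x
  proof -
    have cwx: "continuous_on {0..x} w" by (rule continuous_on_subset[OF cw]) (use x in auto)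
    have ckx: "continuous_on {0..x} (\<lambda>y. kern (x,y))" by (rule cont_sec1[OF ck x])
    have "(?V x)\<^sup>2 \<le> integral {0..x} (\<lambda>y. (kern (x,y))\<^sup>2) * integral {0..x} (\<lambda>y. (w y)\<^sup>2)"
      by (rule cauchy_schwarz_int[OF ckx cwx])
    also have "\<dots> \<le> K\<^sup>2 * ?W2"
    proof (rule mult_mono)
      have "integral {0..x} (\<lambda>y. (kern (x,y))\<^sup>2) \<le> integral {0..x} (\<lambda>y. K\<^sup>2)"
      proof (rule integral_le)
        show "(\<lambda>y. (kern (x,y))\<^sup>2) integrable_on {0..x}" by (intro integrable_continuous_real continuous_intros ckx)
        show "(\<lambda>y. K\<^sup>2) integrable_on {0..x}" by (rule integrable_continuous_real) (rule continuous_on_const)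
        fix y assume y: "y \<in> {0..x}"
        have "\<bar>kern (x,y)\<bar> \<le> K" using kb y x by (auto simp: Tri_def)
        then have "\<bar>kern (x,y)\<bar>\<^sup>2 \<le> K\<^sup>2" by (rule power_mono) simp
        then show "(kern (x,y))\<^sup>2 \<le> K\<^sup>2" by simp
      qed
      also have "\<dots> = K\<^sup>2 * x" using x by simp
      also have "\<dots> \<le> K\<^sup>2" using x by (simp add: mult_left_le)
      finally show "integral {0..x} (\<lambda>y. (kern (x,y))\<^sup>2) \<le> K\<^sup>2" .
      show "integral {0..x} (\<lambda>y. (w y)\<^sup>2) \<le> ?W2" by (rule int_sq_mono[OF cw x])
      show "0 \<le> integral {0..x} (\<lambda>y. (w y)\<^sup>2)" by (rule int_sq_nonneg[OF cwx])
      show "0 \<le> K\<^sup>2" by simp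
    qed
    finally show ?thesis .
  qed
  have cV: "continuous_on {0..1} ?V" by (rule cont_int0[OF ck cw])
  have "integral {0..1} (\<lambda>x. (?V x)\<^sup>2) \<le> integral {0..1} (\<lambda>x::real. K\<^sup>2 * ?W2)"
  proof (rule integral_le)
    show "(\<lambda>x. (?V x)\<^sup>2) integrable_on {0..1}" by (intro integrable_continuous_real continuous_intros cV)
    show "(\<lambda>x::real. K\<^sup>2 * ?W2) integrable_on {0..1}" by (rule integrable_continuous_real) (rule continuous_on_const)
  qed (rule pt)
  also have "\<dots> = K\<^sup>2 * ?W2" by simp
  finally have "sqrt (integral {0..1} (\<lambda>x. (?V x)\<^sup>2)) \<le> sqrt (K\<^sup>2 * ?W2)" by (rule real_sqrt_le_mono)
  also have "\<dots> = K * sqrt ?W2" using K0 by (simp add: real_sqrt_mult)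
  finally show ?thesis unfolding L2norm_def .
qed

lemma volterra_L2_plus:
  fixes kern :: "real \<times> real \<Rightarrow> real" and w :: "real \<Rightarrow> real"
  assumes ck: "continuous_on Tri kern" and kb: "\<And>p. p \<in> Tri \<Longrightarrow> \<bar>kern p\<bar> \<le> K"
    and cw: "continuous_on {0..1} w"
  shows "L2norm (\<lambda>x. w x + integral {0..x} (\<lambda>y. kern (x,y) * w y)) \<le> (1 + K) * L2norm w"
proof -
  have "L2norm (\<lambda>x. w x + integral {0..x} (\<lambda>y. kern (x,y) * w y))
      \<le> L2norm w + L2norm (\<lambda>x. integral {0..x} (\<lambda>y. kern (x,y) * w y))"
    by (rule L2_minkowski[OF cw cont_int0[OF ck cw]])
  also have "\<dots> \<le> L2norm w + K * L2norm w" using volterra_L2[OF ck kb cw] by simp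
  finally show ?thesis by (simp add: algebra_simps)
qed

lemma psi_deriv: "((\<lambda>s. (max 0 (s - 1))\<^sup>2) has_real_derivative (2 * max 0 (s - 1))) (at s)"
proof (cases "s < 1")
  case True
  have "((\<lambda>s. 0::real) has_real_derivative 0) (at s)" by (rule DERIV_const)
  then have "((\<lambda>s. 0::real) has_real_derivative (2 * max 0 (s - 1))) (at s)" using True by simp
  then show ?thesis
    by (rule has_field_derivative_transform_within_open[where S="{..<1}"]) (use True in auto)
next
  case False
  show ?thesis
  proof (cases "s = 1")
    case True
    have "((\<lambda>h. ((max 0 (1 + h - 1))\<^sup>2 - (max 0 (1 - 1))\<^sup>2) / h) \<longlongrightarrow> 0) (at (0::real))"
    proof (rule Lim_null_comparison)
      show "\<forall>\<^sub>F h in at 0. norm (((max 0 (1 + h - 1))\<^sup>2 - (max 0 (1 - 1))\<^sup>2) / h) \<le> \<bar>h\<bar>"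
      proof (rule always_eventually, rule allI)
        fix h :: real
        show "norm (((max 0 (1 + h - 1))\<^sup>2 - (max 0 (1 - 1))\<^sup>2) / h) \<le> \<bar>h\<bar>"
          by (cases "h \<le> 0") (auto simp: power2_eq_square abs_mult)
      qed
      show "((\<lambda>h::real. \<bar>h\<bar>) \<longlongrightarrow> 0) (at 0)"
        by (rule tendsto_eq_intros refl | simp)+
    qed
    then show ?thesis using True by (simp add: DERIV_def)
  next
    case False2: False
    then have s1: "1 < s" using False by simp
    have "((\<lambda>s. (s - 1)\<^sup>2) has_real_derivative (2 * (s - 1))) (at s)"
      by (rule DERIV_cong, (rule derivative_intros)+) simp
    then have "((\<lambda>s. (s - 1)\<^sup>2) has_real_derivative (2 * max 0 (s - 1))) (at s)" using s1 by simp
    then show ?thesis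
      by (rule has_field_derivative_transform_within_open[where S="{1<..}"]) (use s1 in auto)
  qed
qed

lemma energy_decay:
  fixes W Wt :: "real \<Rightarrow> real \<Rightarrow> real" and psi psi' :: "real \<Rightarrow> real"
  assumes cW: "continuous_on ({0..1} \<times> {0..}) (\<lambda>(x,t). W x t)"
    and cWt: "continuous_on ({0..1} \<times> {0..}) (\<lambda>(x,t). Wt x t)"
    and dWt: "\<And>x t. x \<in> {0..1} \<Longrightarrow> 0 \<le> t \<Longrightarrow> ((\<lambda>t. W x t) has_real_derivative Wt x t) (at t within {0..})"
    and dWx: "\<And>x t. x \<in> {0..1} \<Longrightarrow> 0 \<le> t \<Longrightarrow> ((\<lambda>x. W x t) has_real_derivative Wt x t) (at x within {0..1})"
    and bc: "\<And>t. 0 \<le> t \<Longrightarrow> W 1 t = 0"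
    and dpsi: "\<And>s. (psi has_real_derivative psi' s) (at s)"
    and cpsi': "continuous_on UNIV psi'"
    and psi0: "\<And>s. 0 \<le> psi s"
    and ab: "0 \<le> a" "a \<le> b"
  shows "integral {0..1} (\<lambda>x. psi (x + b) * (W x b)\<^sup>2) \<le> integral {0..1} (\<lambda>x. psi (x + a) * (W x a)\<^sup>2)"
proof -
  let ?E = "\<lambda>t. integral {0..1} (\<lambda>x. psi (x + t) * (W x t)\<^sup>2)"
  let ?f' = "\<lambda>t x. psi' (x + t) * (W x t)\<^sup>2 + psi (x + t) * (2 * W x t * Wt x t)"
  have cpsi: "continuous_on UNIV psi"
    using dpsi by (auto simp: continuous_on_eq_continuous_at intro: DERIV_isCont)
  have cW': "continuous_on ({0..} \<times> {0..1}) (\<lambda>(t,x). W x t)"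
  proof -
    have "continuous_on ({0..} \<times> {0..1}) ((\<lambda>(x,t). W x t) \<circ> prod.swap)"
      by (rule continuous_on_compose) (auto intro!: continuous_intros continuous_on_subset[OF cW])
    then show ?thesis by (simp add: o_def case_prod_beta)
  qed
  have cWt': "continuous_on ({0..} \<times> {0..1}) (\<lambda>(t,x). Wt x t)"
  proof -
    have "continuous_on ({0..} \<times> {0..1}) ((\<lambda>(x,t). Wt x t) \<circ> prod.swap)"
      by (rule continuous_on_compose) (auto intro!: continuous_intros continuous_on_subset[OF cWt])
    then show ?thesis by (simp add: o_def case_prod_beta)
  qed
  have cpsi2: "continuous_on S (\<lambda>q. psi (snd q + fst q))" for S :: "(real \<times> real) set"
    by (rule continuous_on_compose2[OF cpsi]) (auto intro!: continuous_intros)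
  have cpsi2': "continuous_on S (\<lambda>q. psi' (snd q + fst q))" for S :: "(real \<times> real) set"
    by (rule continuous_on_compose2[OF cpsi']) (auto intro!: continuous_intros)
  have cf': "continuous_on ({0..} \<times> cbox 0 1) (\<lambda>(t,x). ?f' t x)"
    using cW' cWt' cpsi2 cpsi2'
    unfolding cbox_interval case_prod_beta by (intro continuous_intros) auto
  have dE: "(?E has_real_derivative integral {0..1} (?f' t)) (at t within {0..})" if t: "0 \<le> t" for t
  proof -
    have "((\<lambda>t. integral (cbox 0 1) (\<lambda>x. psi (x + t) * (W x t)\<^sup>2)) has_real_derivative integral (cbox 0 1) (?f' t))
          (at t within {0..})"
    proof (rule leibniz_rule_field_derivative)
      fix s x :: real assume s: "s \<in> {0..}" and x: "x \<in> cbox 0 1"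
      have d1: "((\<lambda>s. psi (x + s)) has_real_derivative psi' (x + s) * 1) (at s within {0..})"
        by (rule DERIV_chain2[OF dpsi]) (auto intro!: derivative_eq_intros)
      have d2: "((\<lambda>s. (W x s)\<^sup>2) has_real_derivative (2 * W x s * Wt x s)) (at s within {0..})"
        using DERIV_power[OF dWt[of x s], of 2] x s by (simp add: cbox_interval mult_ac)
      show "((\<lambda>s. psi (x + s) * (W x s)\<^sup>2) has_real_derivative ?f' s x) (at s within {0..})"
        using DERIV_mult[OF d1 d2] by (simp add: algebra_simps)
    next
      fix s :: real assume s: "s \<in> {0..}"
      have "continuous_on (cbox 0 1) (\<lambda>x. psi (x + s) * (W x s)\<^sup>2)"
        unfolding cbox_interval
        by (intro continuous_intros continuous_on_compose2[OF cpsi] continuous_on_compose2[OF cW, where f="\<lambda>x. (x, s)", simplified])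
           (use s in auto)
      then show "(\<lambda>x. psi (x + s) * (W x s)\<^sup>2) integrable_on cbox 0 1" by (rule integrable_continuous)
    qed (use cf' t in auto)
    then show ?thesis by (simp add: cbox_interval)
  qed
  have Eneg: "integral {0..1} (?f' t) \<le> 0" if t: "0 \<le> t" for t
  proof -
    have "(?f' t has_integral (psi (1 + t) * (W 1 t)\<^sup>2 - psi (0 + t) * (W 0 t)\<^sup>2)) {0..1}"
    proof (rule fundamental_theorem_of_calculus)
      fix x :: real assume x: "x \<in> {0..1}"
      have d1: "((\<lambda>x. psi (x + t)) has_real_derivative psi' (x + t) * 1) (at x within {0..1})"
        by (rule DERIV_chain2[OF dpsi]) (auto intro!: derivative_eq_intros)
      have d2: "((\<lambda>x. (W x t)\<^sup>2) has_real_derivative (2 * W x t * Wt x t)) (at x within {0..1})"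
        using DERIV_power[OF dWx[OF x t], of 2] by (simp add: mult_ac)
      show "((\<lambda>x. psi (x + t) * (W x t)\<^sup>2) has_vector_derivative ?f' t x) (at x within {0..1})"
        using DERIV_mult[OF d1 d2] by (simp add: algebra_simps has_real_derivative_iff_has_vector_derivative)
    qed simp
    then have "integral {0..1} (?f' t) = - psi t * (W 0 t)\<^sup>2" using bc[OF t] by (simp add: integral_unique)
    also have "\<dots> \<le> 0" using psi0[of t] by simp
    finally show ?thesis .
  qed
  have "(integral {0..1} \<circ> ?f' has_integral (?E b - ?E a)) {a..b}"
  proof (rule fundamental_theorem_of_calculus[OF ab(2)])
    fix t assume t: "t \<in> {a..b}"
    have "(?E has_real_derivative integral {0..1} (?f' t)) (at t within {a..b})"
      by (rule DERIV_subset[OF dE]) (use t ab in auto)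
    then show "(?E has_vector_derivative (integral {0..1} \<circ> ?f') t) (at t within {a..b})"
      by (simp add: has_real_derivative_iff_has_vector_derivative)
  qed
  moreover have "((\<lambda>t. 0) has_integral 0) {a..b}" by simp
  ultimately have "?E b - ?E a \<le> 0"
    by (rule has_integral_le) (use Eneg ab in auto)
  then show ?thesis by simp
qed

context kbnd
begin

lemma ck'v: "continuous_on Tri (\<lambda>p. k' p v)"
  by (cases v) (use kC1 in \<open>auto simp: C1_with_def\<close>)

lemma backstep:
  fixes E Et Ex Wf Wt Wx :: "real \<Rightarrow> real"
  assumes cE: "continuous_on {0..1} E" and cWf: "continuous_on {0..1} Wf"
    and cWt: "continuous_on {0..1} Wt" and cWx: "continuous_on {0..1} Wx"
    and Wf_eq: "\<And>x. x \<in> {0..1} \<Longrightarrow> Wf x = E x + integral {0..x} (\<lambda>y. k (x,y) * Wf y)"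
    and Wt_eq: "\<And>x. x \<in> {0..1} \<Longrightarrow> Wt x = Et x + integral {0..x} (\<lambda>y. k (x,y) * Wt y)"
    and Wx_eq: "\<And>x. x \<in> {0..1} \<Longrightarrow> Wx x = Ex x + k (x,x) * Wf x + integral {0..x} (\<lambda>y. k' (x,y) (1,0) * Wf y)"
    and dWf: "\<And>x. x \<in> {0..1} \<Longrightarrow> (Wf has_real_derivative Wx x) (at x within {0..1})"
    and E_pde: "\<And>x. x \<in> {0..1} \<Longrightarrow> Et x = Ex x + k (x,0) * E 0 + integral {0..x} (\<lambda>y. f (x,y) * E y)"
    and x: "x \<in> {0..1}"
  shows "Wt x - Wx x = integral {0..x} (\<lambda>y. k (x,y) * (Wt y - Wx y))"
proof -
  have x01: "0 \<le> x" "x \<le> 1" using x by auto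
  have sub: "{0..x} \<subseteq> {0..1}" using x by auto
  have cEx: "continuous_on {0..x} E" by (rule continuous_on_subset[OF cE sub])
  have cWfx: "continuous_on {0..x} Wf" by (rule continuous_on_subset[OF cWf sub])
  have cWtx: "continuous_on {0..x} Wt" by (rule continuous_on_subset[OF cWt sub])
  have cWxx: "continuous_on {0..x} Wx" by (rule continuous_on_subset[OF cWx sub])
  have ckx: "continuous_on {0..x} (\<lambda>y. k (x,y))" by (rule cont_sec1[OF ck x])
  have cfx: "continuous_on {0..x} (\<lambda>y. f (x,y))" by (rule cont_sec1[OF cf x])
  have ckxx: "continuous_on {0..x} (\<lambda>y. k' (x,y) (1,0))" by (rule cont_sec1[OF ck'v x])
  have ckyx: "continuous_on {0..x} (\<lambda>y. k' (x,y) (0,1))" by (rule cont_sec1[OF ck'v x])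
  note ints = integrable_continuous_real continuous_intros cEx cWfx cWtx cWxx ckx cfx ckxx ckyx
  define Phi where "Phi y = integral {y..x} (\<lambda>\<eta>. f (x,\<eta>) * k (\<eta>,y))" for y
  have Phi_eq: "Phi y = f (x,y) - (k' (x,y) (1,0) + k' (x,y) (0,1))" if y: "y \<in> {0..x}" for y
  proof -
    have "k' (x,y) (0,1) + k' (x,y) (1,0) = f (x,y) - integral {y..x} (\<lambda>\<eta>. f (x,\<eta>) * k (\<eta>,y))"
      using kpde y x by (auto simp: Tri_def)
    then show ?thesis unfolding Phi_def by linarith
  qed
  have cPhi: "continuous_on {0..x} Phi"
    by (rule continuous_on_eq[where f="\<lambda>y. f (x,y) - (k' (x,y) (1,0) + k' (x,y) (0,1))"])
       (auto intro!: continuous_intros cfx ckxx ckyx simp: Phi_eq)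
  have Wf0: "Wf 0 = E 0" using Wf_eq[of 0] by simp
  have ibp: "((\<lambda>y. k' (x,y) (0,1) * Wf y + k (x,y) * Wx y) has_integral (k (x,x) * Wf x - k (x,0) * Wf 0)) {0..x}"
  proof (rule fundamental_theorem_of_calculus[OF x01(1)])
    fix y assume y: "y \<in> {0..x}"
    have d1: "((\<lambda>y. k (x,y)) has_real_derivative k' (x,y) (0,1)) (at y within {0..x})"
      by (rule C1_dy[OF kC1]) (use y x in \<open>auto simp: Tri_def\<close>)
    have d2: "(Wf has_real_derivative Wx y) (at y within {0..x})"
      by (rule DERIV_subset[OF dWf sub]) (use y x in auto)
    show "((\<lambda>y. k (x,y) * Wf y) has_vector_derivative (k' (x,y) (0,1) * Wf y + k (x,y) * Wx y)) (at y within {0..x})"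
      using DERIV_mult[OF d1 d2] by (simp add: has_real_derivative_iff_has_vector_derivative mult.commute)
  qed
  have A: "integral {0..x} (\<lambda>y. k (x,y) * Wx y) = k (x,x) * Wf x - k (x,0) * Wf 0 - integral {0..x} (\<lambda>y. k' (x,y) (0,1) * Wf y)"
  proof -
    have "integral {0..x} (\<lambda>y. k' (x,y) (0,1) * Wf y + k (x,y) * Wx y) = k (x,x) * Wf x - k (x,0) * Wf 0"
      using ibp by (rule integral_unique)
    moreover have "integral {0..x} (\<lambda>y. k' (x,y) (0,1) * Wf y + k (x,y) * Wx y) =
        integral {0..x} (\<lambda>y. k' (x,y) (0,1) * Wf y) + integral {0..x} (\<lambda>y. k (x,y) * Wx y)"
      by (rule integral_add) (intro ints)+
    ultimately show ?thesis by linarith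
  qed
  have B: "integral {0..x} (\<lambda>y. (k' (x,y) (1,0) + k' (x,y) (0,1)) * Wf y) =
     integral {0..x} (\<lambda>y. k' (x,y) (1,0) * Wf y) + integral {0..x} (\<lambda>y. k' (x,y) (0,1) * Wf y)"
    by (subst integral_add[symmetric]) (auto simp: algebra_simps intro!: ints)
  have C: "integral {0..x} (\<lambda>y. (k' (x,y) (1,0) + k' (x,y) (0,1)) * Wf y) =
     integral {0..x} (\<lambda>y. f (x,y) * Wf y) - integral {0..x} (\<lambda>y. Phi y * Wf y)"
  proof -
    have "integral {0..x} (\<lambda>y. (k' (x,y) (1,0) + k' (x,y) (0,1)) * Wf y) =
          integral {0..x} (\<lambda>y. f (x,y) * Wf y - Phi y * Wf y)"
      by (rule integral_cong) (simp add: Phi_eq algebra_simps)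
    also have "\<dots> = integral {0..x} (\<lambda>y. f (x,y) * Wf y) - integral {0..x} (\<lambda>y. Phi y * Wf y)"
      by (rule integral_diff) (intro ints cPhi)+
    finally show ?thesis .
  qed
  have D: "integral {0..x} (\<lambda>y. Phi y * Wf y) = integral {0..x} (\<lambda>\<eta>. f (x,\<eta>) * (Wf \<eta> - E \<eta>))"
  proof -
    have "integral {0..x} (\<lambda>y. Phi y * Wf y) = integral {0..x} (\<lambda>y. integral {y..x} (\<lambda>\<eta>. f (x,\<eta>) * k (\<eta>,y) * Wf y))"
      by (rule integral_cong) (simp add: Phi_def integral_mult_left)
    also have "\<dots> = integral {0..x} (\<lambda>\<eta>. integral {0..\<eta>} (\<lambda>y. f (x,\<eta>) * k (\<eta>,y) * Wf y))"
    proof (rule tri_fubini[symmetric, OF x01(1)])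
      let ?S = "{(\<eta>, y). 0 \<le> y \<and> y \<le> \<eta> \<and> \<eta> \<le> x}"
      have 1: "continuous_on ?S (\<lambda>q. f (x, fst q))"
        by (rule continuous_on_compose2[OF cf]) (use x in \<open>auto intro!: continuous_intros simp: Tri_def\<close>)
      have 2: "continuous_on ?S (\<lambda>q. k (fst q, snd q))"
        by (rule continuous_on_compose2[OF ck]) (use x in \<open>auto intro!: continuous_intros simp: Tri_def\<close>)
      have 3: "continuous_on ?S (\<lambda>q. Wf (snd q))"
        by (rule continuous_on_compose2[OF cWf]) (use x in \<open>auto intro!: continuous_intros\<close>)
      show "continuous_on ?S (\<lambda>(\<eta>, y). f (x, \<eta>) * k (\<eta>, y) * Wf y)"
        using continuous_on_mult[OF continuous_on_mult[OF 1 2] 3] by (simp add: case_prod_beta)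
    qed
    also have "\<dots> = integral {0..x} (\<lambda>\<eta>. f (x,\<eta>) * (Wf \<eta> - E \<eta>))"
    proof (rule integral_cong)
      fix \<eta> assume e: "\<eta> \<in> {0..x}"
      have "integral {0..\<eta>} (\<lambda>y. f (x,\<eta>) * k (\<eta>,y) * Wf y) = f (x,\<eta>) * integral {0..\<eta>} (\<lambda>y. k (\<eta>,y) * Wf y)"
        by (simp add: mult.assoc integral_mult_right)
      also have "integral {0..\<eta>} (\<lambda>y. k (\<eta>,y) * Wf y) = Wf \<eta> - E \<eta>"
        using Wf_eq[of \<eta>] e x by auto
      finally show "integral {0..\<eta>} (\<lambda>y. f (x,\<eta>) * k (\<eta>,y) * Wf y) = f (x,\<eta>) * (Wf \<eta> - E \<eta>)" .
    qed
    finally show ?thesis .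
  qed
  have D2: "integral {0..x} (\<lambda>\<eta>. f (x,\<eta>) * (Wf \<eta> - E \<eta>)) =
      integral {0..x} (\<lambda>y. f (x,y) * Wf y) - integral {0..x} (\<lambda>y. f (x,y) * E y)"
    by (subst integral_diff[symmetric]) (auto simp: algebra_simps intro!: ints)
  have F: "integral {0..x} (\<lambda>y. k (x,y) * (Wt y - Wx y)) =
      integral {0..x} (\<lambda>y. k (x,y) * Wt y) - integral {0..x} (\<lambda>y. k (x,y) * Wx y)"
    by (subst integral_diff[symmetric]) (auto simp: algebra_simps intro!: ints)
  have G: "integral {0..x} (\<lambda>y. (k' (x,y) (1,0) + k' (x,y) (0,1)) * Wf y) =
     integral {0..x} (\<lambda>y. k' (x,y) (1,0) * Wf y) + integral {0..x} (\<lambda>y. k' (x,y) (0,1) * Wf y)" by (rule B)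
  show ?thesis
    using Wt_eq[OF x] Wx_eq[OF x] E_pde[OF x] A[unfolded Wf0] B C D D2 F by linarith
qed

end

lemma Dom_iff: "(x,t) \<in> Dom \<longleftrightarrow> x \<in> {0..1} \<and> 0 \<le> t" by (auto simp: Dom_def)

lemma cont_Dom_sec:
  assumes "continuous_on Dom (\<lambda>p. h (fst p) (snd p))" "0 \<le> t"
  shows "continuous_on {0..1} (\<lambda>x. h x t)"
  by (rule continuous_on_compose2[OF assms(1), where f="\<lambda>x. (x,t)", simplified])
     (use assms(2) in \<open>auto intro!: continuous_intros simp: Dom_iff\<close>)

lemma cont_Dom_int:
  fixes a :: "real \<times> real \<Rightarrow> real" and h :: "real \<Rightarrow> real \<Rightarrow> real"
  assumes ca: "continuous_on Tri a" and ch: "continuous_on Dom (\<lambda>p. h (fst p) (snd p))"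
  shows "continuous_on Dom (\<lambda>p. integral {0..fst p} (\<lambda>y. a (fst p, y) * h y (snd p)))"
proof (rule cont_var_integral[where a=0 and b=1 and lo="\<lambda>_. 0" and hi=fst and G="\<lambda>p y. a (fst p, y) * h y (snd p)"])
  let ?S = "{(p, s). p \<in> Dom \<and> 0 \<le> s \<and> s \<le> fst p}"
  have 1: "continuous_on ?S (\<lambda>q. a (fst (fst q), snd q))"
    by (rule continuous_on_compose2[OF ca]) (auto intro!: continuous_intros simp: Tri_def Dom_def)
  have 2: "continuous_on ?S (\<lambda>q. h (snd q) (snd (fst q)))"
    by (rule continuous_on_compose2[OF ch, where f="\<lambda>q. (snd q, snd (fst q))", simplified])
       (auto intro!: continuous_intros simp: Dom_def)
  show "continuous_on ?S (\<lambda>(p, y). a (fst p, y) * h y (snd p))"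
    using continuous_on_mult[OF 1 2] by (simp add: case_prod_beta)
qed (auto intro!: continuous_intros simp: Dom_def)

locale mainctx = kbnd f k k' Mf for f k k' Mf +
  fixes g :: "real \<Rightarrow> real" and u hu :: "real \<times> real \<Rightarrow> real"
    and u' hu' :: "real \<times> real \<Rightarrow> real \<times> real \<Rightarrow> real" and U :: "real \<Rightarrow> real"
  assumes u_C1: "C1_with u u' Dom"
    and u_pde: "\<forall>x t. (x, t) \<in> Dom \<longrightarrow>
        u' (x, t) (0, 1) = u' (x, t) (1, 0) + g x * u (0, t)
                           + integral {0..x} (\<lambda>y. f (x, y) * u (y, t))"
    and u_bc: "\<forall>t\<ge>0. u (1, t) = U t"
    and hu_C1: "C1_with hu hu' Dom"
    and hu_pde: "\<forall>x t. (x, t) \<in> Dom \<longrightarrow>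
        hu' (x, t) (0, 1) = hu' (x, t) (1, 0) + g x * hu (0, t)
                           + integral {0..x} (\<lambda>y. f (x, y) * hu (y, t))
                           + (g x - k (x, 0)) * (u (0, t) - hu (0, t))"
    and hu_bc: "\<forall>t\<ge>0. hu (1, t) = U t"
begin

definition "B = exp Mf - 1"

lemma kB: "p \<in> Tri \<Longrightarrow> \<bar>k p\<bar> \<le> B" unfolding B_def by (rule kbound)

sublocale vk: vkern k B by unfold_locales (rule ck, rule kB)

definition "e x t = u (x,t) - hu (x,t)"
definition "et x t = u' (x,t) (0,1) - hu' (x,t) (0,1)"
definition "ex x t = u' (x,t) (1,0) - hu' (x,t) (1,0)"
definition "W x t = e x t + integral {0..x} (\<lambda>y. vk.res (x,y) * e y t)"
definition "Wt x t = et x t + integral {0..x} (\<lambda>y. vk.res (x,y) * et y t)"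
definition "Wx x t = ex x t + k (x,x) * W x t + integral {0..x} (\<lambda>y. k' (x,y) (1,0) * W y t)"

lemma cu: "continuous_on Dom u" using C1_cont[OF u_C1] .
lemma chu: "continuous_on Dom hu" using C1_cont[OF hu_C1] .
lemma cu'v: "continuous_on Dom (\<lambda>p. u' p v)" by (cases v) (use u_C1 in \<open>auto simp: C1_with_def\<close>)
lemma chu'v: "continuous_on Dom (\<lambda>p. hu' p v)" by (cases v) (use hu_C1 in \<open>auto simp: C1_with_def\<close>)

lemma ce: "continuous_on Dom (\<lambda>p. e (fst p) (snd p))"
  unfolding e_def using cu chu by (auto intro!: continuous_intros)
lemma cet: "continuous_on Dom (\<lambda>p. et (fst p) (snd p))"
  unfolding et_def using cu'v chu'v by (auto intro!: continuous_intros)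
lemma cex: "continuous_on Dom (\<lambda>p. ex (fst p) (snd p))"
  unfolding ex_def using cu'v chu'v by (auto intro!: continuous_intros)

lemma dEt:
  assumes x: "x \<in> {0..1}" and t: "0 \<le> t"
  shows "((\<lambda>t. e x t) has_real_derivative et x t) (at t within {0..})"
proof -
  have 1: "((\<lambda>s. u (x, s)) has_real_derivative u' (x, t) (0,1)) (at t within {0..})"
    by (rule C1_dy[OF u_C1]) (use x t in \<open>auto simp: Dom_iff\<close>)
  have 2: "((\<lambda>s. hu (x, s)) has_real_derivative hu' (x, t) (0,1)) (at t within {0..})"
    by (rule C1_dy[OF hu_C1]) (use x t in \<open>auto simp: Dom_iff\<close>)
  show ?thesis unfolding e_def et_def by (rule DERIV_diff[OF 1 2])
qed

lemma dEx:
  assumes x: "x \<in> {0..1}" and t: "0 \<le> t"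
  shows "((\<lambda>x. e x t) has_real_derivative ex x t) (at x within {0..1})"
proof -
  have 1: "((\<lambda>s. u (s, t)) has_real_derivative u' (x, t) (1,0)) (at x within {0..1})"
    by (rule C1_dx[OF u_C1]) (use x t in \<open>auto simp: Dom_iff\<close>)
  have 2: "((\<lambda>s. hu (s, t)) has_real_derivative hu' (x, t) (1,0)) (at x within {0..1})"
    by (rule C1_dx[OF hu_C1]) (use x t in \<open>auto simp: Dom_iff\<close>)
  show ?thesis unfolding e_def ex_def by (rule DERIV_diff[OF 1 2])
qed

lemma e_bc: "0 \<le> t \<Longrightarrow> e 1 t = 0" using u_bc hu_bc by (simp add: e_def)

lemma e_pde:
  assumes x: "x \<in> {0..1}" and t: "0 \<le> t"
  shows "et x t = ex x t + k (x,0) * e 0 t + integral {0..x} (\<lambda>y. f (x,y) * e y t)"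
proof -
  have xt: "(x,t) \<in> Dom" using x t by (simp add: Dom_iff)
  have sub: "{0..x} \<subseteq> {0..1}" using x by auto
  have c1: "continuous_on {0..x} (\<lambda>y. f (x,y))" by (rule cont_sec1[OF cf x])
  have c2: "continuous_on {0..x} (\<lambda>y. u (y,t))"
    by (rule continuous_on_compose2[OF cu]) (use x t in \<open>auto intro!: continuous_intros simp: Dom_iff\<close>)
  have c3: "continuous_on {0..x} (\<lambda>y. hu (y,t))"
    by (rule continuous_on_compose2[OF chu]) (use x t in \<open>auto intro!: continuous_intros simp: Dom_iff\<close>)
  have I: "integral {0..x} (\<lambda>y. f (x,y) * e y t) =
      integral {0..x} (\<lambda>y. f (x,y) * u (y,t)) - integral {0..x} (\<lambda>y. f (x,y) * hu (y,t))"
    unfolding e_def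
    by (subst integral_diff[symmetric]) (auto simp: algebra_simps intro!: integrable_continuous_real continuous_intros c1 c2 c3)
  have "et x t = (u' (x,t) (1,0) - hu' (x,t) (1,0)) + g x * (u (0,t) - hu (0,t))
         + (integral {0..x} (\<lambda>y. f (x,y) * u (y,t)) - integral {0..x} (\<lambda>y. f (x,y) * hu (y,t)))
         - (g x - k (x,0)) * (u (0,t) - hu (0,t))"
    unfolding et_def using u_pde hu_pde xt by (simp add: algebra_simps)
  also have "\<dots> = ex x t + k (x,0) * e 0 t + integral {0..x} (\<lambda>y. f (x,y) * e y t)"
    unfolding I by (simp add: ex_def e_def algebra_simps)
  finally show ?thesis .
qed

lemma cW: "continuous_on Dom (\<lambda>p. W (fst p) (snd p))"
  unfolding W_def by (intro continuous_intros ce cont_Dom_int[OF vk.res_cont ce])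

lemma cWt: "continuous_on Dom (\<lambda>p. Wt (fst p) (snd p))"
  unfolding Wt_def by (intro continuous_intros cet cont_Dom_int[OF vk.res_cont cet])


lemma dWt:
  assumes x: "x \<in> {0..1}" and t: "0 \<le> t"
  shows "((\<lambda>t. W x t) has_real_derivative Wt x t) (at t within {0..})"
proof -
  have cr: "continuous_on {0..x} (\<lambda>y. vk.res (x,y))" by (rule cont_sec1[OF vk.res_cont x])
  have L: "((\<lambda>t. integral (cbox 0 x) (\<lambda>y. vk.res (x,y) * e y t)) has_real_derivative
            integral (cbox 0 x) (\<lambda>y. vk.res (x,y) * et y t)) (at t within {0..})"
  proof (rule leibniz_rule_field_derivative)
    fix s y :: real assume s: "s \<in> {0..}" and y: "y \<in> cbox 0 x"
    have "y \<in> {0..1}" using y x by (auto simp: cbox_interval)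
    then show "((\<lambda>s. vk.res (x,y) * e y s) has_real_derivative vk.res (x,y) * et y s) (at s within {0..})"
      using s by (intro DERIV_cmult dEt) auto
  next
    fix s :: real assume s: "s \<in> {0..}"
    have "continuous_on {0..x} (\<lambda>y. e y s)"
      by (rule continuous_on_subset[OF cont_Dom_sec[OF ce]]) (use s x in auto)
    then show "(\<lambda>y. vk.res (x,y) * e y s) integrable_on cbox 0 x"
      unfolding cbox_interval by (intro integrable_continuous_real continuous_intros cr)
  next
    have "continuous_on ({0..} \<times> {0..x}) (\<lambda>q. et (snd q) (fst q))"
      by (rule continuous_on_compose2[OF cet, where f="\<lambda>q. (snd q, fst q)", simplified])
         (use x in \<open>auto intro!: continuous_intros simp: Dom_def\<close>)
    moreover have "continuous_on ({0..} \<times> {0..x}) (\<lambda>q. vk.res (x, snd q))"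
      by (rule continuous_on_compose2[OF cr]) (auto intro!: continuous_intros)
    ultimately show "continuous_on ({0..} \<times> cbox 0 x) (\<lambda>(s, y). vk.res (x,y) * et y s)"
      unfolding cbox_interval case_prod_beta by (intro continuous_intros)
  qed (use t in auto)
  show ?thesis unfolding W_def Wt_def
    by (rule DERIV_add[OF dEt[OF x t]]) (use L in \<open>simp add: cbox_interval\<close>)
qed

lemma W_volt:
  assumes x: "x \<in> {0..1}" and t: "0 \<le> t"
  shows "W x t = e x t + integral {0..x} (\<lambda>y. k (x,y) * W y t)"
  unfolding W_def by (rule vk.res_apply[OF cont_Dom_sec[OF ce t] x])

lemma Wt_volt:
  assumes x: "x \<in> {0..1}" and t: "0 \<le> t"
  shows "Wt x t = et x t + integral {0..x} (\<lambda>y. k (x,y) * Wt y t)"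
  unfolding Wt_def by (rule vk.res_apply[OF cont_Dom_sec[OF cet t] x])

lemma cWsec: "0 \<le> t \<Longrightarrow> continuous_on {0..1} (\<lambda>x. W x t)" by (rule cont_Dom_sec[OF cW])
lemma cWtsec: "0 \<le> t \<Longrightarrow> continuous_on {0..1} (\<lambda>x. Wt x t)" by (rule cont_Dom_sec[OF cWt])

lemma cWxsec:
  assumes t: "0 \<le> t" shows "continuous_on {0..1} (\<lambda>x. Wx x t)"
proof -
  have 1: "continuous_on {0..1} (\<lambda>x. k (x,x))"
    by (rule continuous_on_compose2[OF ck]) (auto intro!: continuous_intros simp: Tri_def)
  show ?thesis unfolding Wx_def
    by (intro continuous_intros 1 cont_Dom_sec[OF cex t] cWsec[OF t] cont_int0[OF ck'v cWsec[OF t]])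
qed

lemma dWx:
  assumes x: "x \<in> {0..1}" and t: "0 \<le> t"
  shows "((\<lambda>x. W x t) has_real_derivative Wx x t) (at x within {0..1})"
proof -
  let ?D = "{(x,y). 0 \<le> y \<and> y \<le> x \<and> x \<le> (1::real)}"
  have DT: "?D = Tri" by (auto simp: Tri_def)
  have cF: "continuous_on ?D (\<lambda>(x,y). k (x,y) * W y t)"
  proof -
    have 1: "continuous_on ?D (\<lambda>q. k q)" using ck DT by simp
    have 2: "continuous_on ?D (\<lambda>q. W (snd q) t)"
      by (rule continuous_on_compose2[OF cWsec[OF t]]) (auto intro!: continuous_intros)
    show ?thesis using continuous_on_mult[OF 1 2] by (simp add: case_prod_beta)
  qed
  have cFx: "continuous_on ?D (\<lambda>(x,y). k' (x,y) (1,0) * W y t)"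
  proof -
    have 1: "continuous_on ?D (\<lambda>q. k' q (1,0))" using ck'v DT by simp
    have 2: "continuous_on ?D (\<lambda>q. W (snd q) t)"
      by (rule continuous_on_compose2[OF cWsec[OF t]]) (auto intro!: continuous_intros)
    show ?thesis using continuous_on_mult[OF 1 2] by (simp add: case_prod_beta)
  qed
  have dF: "((\<lambda>\<xi>. k (\<xi>,y) * W y t) has_real_derivative k' (\<xi>,y) (1,0) * W y t) (at \<xi> within {y..1})"
    if "0 \<le> y" "y \<le> \<xi>" "\<xi> \<le> 1" for \<xi> y
  proof -
    have "((\<lambda>\<xi>. k (\<xi>,y)) has_real_derivative k' (\<xi>,y) (1,0)) (at \<xi> within {y..1})"
      by (rule C1_dx[OF kC1]) (use that in \<open>auto simp: Tri_def\<close>)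
    then show ?thesis by (rule DERIV_cmult_right)
  qed
  have dI: "((\<lambda>x. integral {0..x} (\<lambda>y. k (x,y) * W y t)) has_real_derivative
        (k (x,x) * W x t + integral {0..x} (\<lambda>y. k' (x,y) (1,0) * W y t))) (at x within {0..1})"
    by (rule deriv_var_int[OF cF cFx dF x])
  have "((\<lambda>x. e x t + integral {0..x} (\<lambda>y. k (x,y) * W y t)) has_real_derivative Wx x t) (at x within {0..1})"
    unfolding Wx_def using DERIV_add[OF dEx[OF x t] dI] by (simp add: add.assoc)
  then show ?thesis
    by (rule has_field_derivative_transform_within[OF _ zero_less_one x]) (use W_volt t in simp)
qed

lemma Wt_eq_Wx:
  assumes x: "x \<in> {0..1}" and t: "0 \<le> t"
  shows "Wt x t = Wx x t"
proof -
  let ?R = "\<lambda>x. Wt x t - Wx x t"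
  have R: "?R y = integral {0..y} (\<lambda>z. k (y,z) * ?R z)" if y: "y \<in> {0..1}" for y
  proof (rule backstep[where E="\<lambda>x. e x t" and Et="\<lambda>x. et x t" and Ex="\<lambda>x. ex x t" and Wf="\<lambda>x. W x t"])
    show "continuous_on {0..1} (\<lambda>x. e x t)" by (rule cont_Dom_sec[OF ce t])
    show "continuous_on {0..1} (\<lambda>x. W x t)" by (rule cWsec[OF t])
    show "continuous_on {0..1} (\<lambda>x. Wt x t)" by (rule cWtsec[OF t])
    show "continuous_on {0..1} (\<lambda>x. Wx x t)" by (rule cWxsec[OF t])
    show "\<And>x. x \<in> {0..1} \<Longrightarrow> W x t = e x t + integral {0..x} (\<lambda>y. k (x,y) * W y t)"
      using W_volt t by blast
    show "\<And>x. x \<in> {0..1} \<Longrightarrow> Wt x t = et x t + integral {0..x} (\<lambda>y. k (x,y) * Wt y t)"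
      using Wt_volt t by blast
    show "\<And>x. x \<in> {0..1} \<Longrightarrow> Wx x t = ex x t + k (x,x) * W x t + integral {0..x} (\<lambda>y. k' (x,y) (1,0) * W y t)"
      by (simp add: Wx_def)
    show "\<And>x. x \<in> {0..1} \<Longrightarrow> ((\<lambda>x. W x t) has_real_derivative Wx x t) (at x within {0..1})"
      using dWx t by blast
    show "\<And>x. x \<in> {0..1} \<Longrightarrow> et x t = ex x t + k (x,0) * e 0 t + integral {0..x} (\<lambda>y. f (x,y) * e y t)"
      using e_pde t by blast
    show "y \<in> {0..1}" by (rule y)
  qed
  have cR: "continuous_on {0..1} ?R" by (intro continuous_intros cWtsec cWxsec t)
  show ?thesis using vk.volterra_inj[OF cR R x] by simp
qed

end

lemma L2norm_cong: "(\<And>x. x \<in> {0..1} \<Longrightarrow> a x = b x) \<Longrightarrow> L2norm a = L2norm b"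
  unfolding L2norm_def by (metis (mono_tags, lifting) integral_cong)

lemma L2norm_nonneg: "0 \<le> L2norm a"
  unfolding L2norm_def
  by (cases "(\<lambda>x. (a x)\<^sup>2) integrable_on {0..1}")
     (auto simp: not_integrable_integral intro!: Henstock_Kurzweil_Integration.integral_nonneg)

context mainctx
begin

lemma W_bc: "0 \<le> t \<Longrightarrow> W 1 t = 0"
proof -
  assume t: "0 \<le> t"
  have "W 1 t = e 1 t + integral {0..1} (\<lambda>y. k (1,y) * W y t)" using W_volt[of 1 t] t by simp
  also have "integral {0..1} (\<lambda>y. k (1,y) * W y t) = integral {0..1} (\<lambda>y::real. 0)"
    by (rule integral_cong) (use kbc in simp)
  finally show ?thesis using e_bc[OF t] by simp
qed

lemma cW2: "continuous_on ({0..1} \<times> {0..}) (\<lambda>(x,t). W x t)"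
  using cW by (simp add: Dom_def case_prod_beta)
lemma cWt2: "continuous_on ({0..1} \<times> {0..}) (\<lambda>(x,t). Wt x t)"
  using cWt by (simp add: Dom_def case_prod_beta)
lemma dWx': "x \<in> {0..1} \<Longrightarrow> 0 \<le> t \<Longrightarrow> ((\<lambda>x. W x t) has_real_derivative Wt x t) (at x within {0..1})"
  using dWx Wt_eq_Wx by simp

lemma W_L2: assumes t: "0 \<le> t" shows "L2norm (\<lambda>x. W x t) \<le> L2norm (\<lambda>x. W x 0)"
proof -
  have "integral {0..1} (\<lambda>x. (\<lambda>s. 1) (x + t) * (W x t)\<^sup>2) \<le> integral {0..1} (\<lambda>x. (\<lambda>s. 1) (x + 0) * (W x 0)\<^sup>2)"
    by (rule energy_decay[OF cW2 cWt2 dWt dWx' W_bc, where psi' = "\<lambda>s. 0"]) (use t in auto)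
  then show ?thesis unfolding L2norm_def by simp
qed

lemma W_zero:
  assumes t: "1 \<le> t" and x: "x \<in> {0..1}"
  shows "W x t = 0"
proof -
  let ?psi = "\<lambda>s::real. (max 0 (s - 1))\<^sup>2"
  let ?h = "\<lambda>x. ?psi (x + t) * (W x t)\<^sup>2"
  have t0: "0 \<le> t" using t by simp
  have E: "integral {0..1} ?h \<le> integral {0..1} (\<lambda>x. ?psi (x + 0) * (W x 0)\<^sup>2)"
    by (rule energy_decay[OF cW2 cWt2 dWt dWx' W_bc psi_deriv]) (auto intro!: continuous_intros t0)
  have E0: "integral {0..1} (\<lambda>x. ?psi (x + 0) * (W x 0)\<^sup>2) = 0"
  proof -
    have "integral {0..1} (\<lambda>x. ?psi (x + 0) * (W x 0)\<^sup>2) = integral {0..1} (\<lambda>x::real. 0)"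
      by (rule integral_cong) auto
    then show ?thesis by simp
  qed
  have ch: "continuous_on {0..1} ?h"
    by (intro continuous_intros cWsec t0)
  have hnn: "0 \<le> ?h x" for x by simp
  have I0: "integral {0..1} ?h = 0"
  proof -
    have "0 \<le> integral {0..1} ?h"
      by (rule integral_nonneg) (auto intro: integrable_continuous_real[OF ch])
    then show ?thesis using E E0 by linarith
  qed
  have hz: "?h z = 0" if z: "z \<in> {0..1}" for z
  proof (rule has_integral_0_cbox_imp_0[of 0 1 ?h])
    show "continuous_on (cbox 0 1) ?h" using ch by (simp add: cbox_interval)
    show "(?h has_integral 0) (cbox 0 1)"
      using integrable_integral[OF integrable_continuous_real[OF ch]] I0 by (simp add: cbox_interval)
  qed (use z in \<open>auto simp: cbox_interval\<close>)
  have Wz: "W z t = 0" if z: "z \<in> {0<..1}" for z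
  proof -
    have "1 < z + t" using z t by auto
    then have p: "?psi (z + t) \<noteq> 0" by simp
    have "?h z = 0" using hz z by auto
    then have "(W z t)\<^sup>2 = 0" using p by (simp only: mult_eq_0_iff) simp
    then show ?thesis by simp
  qed
  have cl: "closed {z \<in> {0..1}. W z t = 0}"
    by (rule continuous_closed_preimage_constant[OF cWsec[OF t0]]) simp
  have "{0<..1} \<subseteq> {z \<in> {0..1}. W z t = 0}" using Wz by auto
  then have "closure {0<..(1::real)} \<subseteq> {z \<in> {0..1}. W z t = 0}"
    by (rule closure_minimal[OF _ cl])
  then show ?thesis using x by auto
qed

lemma e_W: assumes x: "x \<in> {0..1}" and t: "0 \<le> t"
  shows "e x t = W x t + integral {0..x} (\<lambda>y. (- k (x,y)) * W y t)"
proof -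
  have "integral {0..x} (\<lambda>y. (- k (x,y)) * W y t) = integral {0..x} (\<lambda>y. - (k (x,y) * W y t))"
    by (rule integral_cong) simp
  also have "\<dots> = - integral {0..x} (\<lambda>y. k (x,y) * W y t)" by (rule integral_neg)
  finally show ?thesis using W_volt[OF x t] by linarith
qed

lemma e_zero: assumes t: "1 \<le> t" and x: "x \<in> {0..1}" shows "e x t = 0"
proof -
  have "integral {0..x} (\<lambda>y. (- k (x,y)) * W y t) = integral {0..x} (\<lambda>y::real. 0)"
    by (rule integral_cong) (use W_zero t x in auto)
  moreover have "integral {0..x} (\<lambda>y::real. 0::real) = 0" by simp
  ultimately show ?thesis using e_W[OF x, of t] t W_zero[OF t x] by linarith
qed

lemma e_L2: assumes t: "0 \<le> t"
  shows "L2norm (\<lambda>x. e x t) \<le> (1 + B) * (1 + B * exp B) * L2norm (\<lambda>x. e x 0)"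
proof -
  have B0: "0 \<le> B" by (rule vk.B_nonneg)
  have cmk: "continuous_on Tri (\<lambda>p. - k p)" by (intro continuous_intros ck)
  have "L2norm (\<lambda>x. e x t) = L2norm (\<lambda>x. W x t + integral {0..x} (\<lambda>y. (- k (x,y)) * W y t))"
    by (rule L2norm_cong) (rule e_W[OF _ t])
  also have "\<dots> \<le> (1 + B) * L2norm (\<lambda>x. W x t)"
    by (rule volterra_L2_plus[OF cmk _ cWsec[OF t]]) (use kB in auto)
  finally have 1: "L2norm (\<lambda>x. e x t) \<le> (1 + B) * L2norm (\<lambda>x. W x t)" .
  have 2: "L2norm (\<lambda>x. W x t) \<le> L2norm (\<lambda>x. W x 0)" by (rule W_L2[OF t])
  have "L2norm (\<lambda>x. W x 0) = L2norm (\<lambda>x. e x 0 + integral {0..x} (\<lambda>y. vk.res (x,y) * e y 0))"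
    by (simp add: W_def)
  also have "\<dots> \<le> (1 + B * exp B) * L2norm (\<lambda>x. e x 0)"
    by (rule volterra_L2_plus[OF vk.res_cont vk.res_bound cont_Dom_sec[OF ce]]) auto
  finally have 3: "L2norm (\<lambda>x. W x 0) \<le> (1 + B * exp B) * L2norm (\<lambda>x. e x 0)" .
  have "(1 + B) * L2norm (\<lambda>x. W x t) \<le> (1 + B) * ((1 + B * exp B) * L2norm (\<lambda>x. e x 0))"
    by (rule mult_left_mono) (use 2 3 B0 in auto)
  then show ?thesis using 1 by (simp add: mult.assoc)
qed

end

theorem theorem2:
  fixes f k :: "real \<times> real \<Rightarrow> real"
    and k' :: "real \<times> real \<Rightarrow> real \<times> real \<Rightarrow> real"
    and g U Ud u0 u0d hu0 hu0d :: "real \<Rightarrow> real"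
    and u hu :: "real \<times> real \<Rightarrow> real"
    and u' hu' :: "real \<times> real \<Rightarrow> real \<times> real \<Rightarrow> real"
  assumes f_C1: "C1_on2 f Tri"
    and g_C1: "C1_on1 g {0..1}"
    and k_C1: "C1_with k k' Tri"
    and k_pde: "\<forall>x y. (x, y) \<in> Tri \<longrightarrow>
        k' (x, y) (0, 1) + k' (x, y) (1, 0)
          = f (x, y) - integral {y..x} (\<lambda>\<eta>. f (x, \<eta>) * k (\<eta>, y))"
    and k_bc: "\<forall>y\<in>{0..1}. k (1, y) = 0"
    and U_C1: "C1_with1 U Ud {0..}"
    and u0_C1: "C1_with1 u0 u0d {0..1}"
    and hu0_C1: "C1_with1 hu0 hu0d {0..1}"
    and compat1: "u0 1 = U 0"
    and compat2: "Ud 0 = u0d 1 + g 1 * u0 0 + integral {0..1} (\<lambda>y. f (1, y) * u0 y)"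
    and compat3: "hu0 1 = U 0"
    and compat4: "Ud 0 = hu0d 1 + g 1 * hu0 0 + integral {0..1} (\<lambda>y. f (1, y) * hu0 y)
                     + (g 1 - k (1, 0)) * (u0 0 - hu0 0)"
    and u_C1: "C1_with u u' Dom"
    and u_pde: "\<forall>x t. (x, t) \<in> Dom \<longrightarrow>
        u' (x, t) (0, 1) = u' (x, t) (1, 0) + g x * u (0, t)
                           + integral {0..x} (\<lambda>y. f (x, y) * u (y, t))"
    and u_bc: "\<forall>t\<ge>0. u (1, t) = U t"
    and u_ic: "\<forall>x\<in>{0..1}. u (x, 0) = u0 x"
    and hu_C1: "C1_with hu hu' Dom"
    and hu_pde: "\<forall>x t. (x, t) \<in> Dom \<longrightarrow>
        hu' (x, t) (0, 1) = hu' (x, t) (1, 0) + g x * hu (0, t)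
                           + integral {0..x} (\<lambda>y. f (x, y) * hu (y, t))
                           + (g x - k (x, 0)) * (u (0, t) - hu (0, t))"
    and hu_bc: "\<forall>t\<ge>0. hu (1, t) = U t"
    and hu_ic: "\<forall>x\<in>{0..1}. hu (x, 0) = hu0 x"
  shows "(\<forall>t\<ge>0. \<forall>c>0.
           (let Mf = (SUP p\<in>Tri. \<bar>f p\<bar>);
                M = exp c * (1 + (Mf * exp Mf) * exp (Mf * exp Mf)) * (1 + Mf * exp Mf)
            in L2norm (\<lambda>x. u (x, t) - hu (x, t)) \<le> M * exp (- c * t) * L2norm (\<lambda>x. u0 x - hu0 x)))
       \<and> (\<forall>t\<ge>1. \<forall>x\<in>{0..1}. hu (x, t) = u (x, t))"
proof -
  obtain f' where fC: "C1_with f f' Tri" using f_C1 unfolding C1_on2_def by blast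
  have cf: "continuous_on Tri f" by (rule C1_cont[OF fC])
  define Mf where "Mf = (SUP p\<in>Tri. \<bar>f p\<bar>)"
  obtain Cf where Cf: "\<And>p. p \<in> Tri \<Longrightarrow> \<bar>f p\<bar> \<le> Cf" using bounded_on_Tri[OF cf] by blast
  have bdd: "bdd_above ((\<lambda>p. \<bar>f p\<bar>) ` Tri)" by (rule bdd_aboveI2[where M=Cf]) (rule Cf)
  have fM: "\<And>p. p \<in> Tri \<Longrightarrow> \<bar>f p\<bar> \<le> Mf" unfolding Mf_def by (rule cSUP_upper[OF _ bdd])
  interpret M: mainctx f k k' Mf g u hu u' hu' U
    by unfold_locales (fact cf fM k_C1 k_pde k_bc u_C1 u_pde u_bc hu_C1 hu_pde hu_bc)+
  have Mf0: "0 \<le> Mf" by (rule M.Mf_nonneg)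
  define L where "L = Mf * exp Mf"
  have L0: "0 \<le> L" unfolding L_def using Mf0 by simp
  have B0: "0 \<le> M.B" by (rule M.vk.B_nonneg)
  have BL: "M.B \<le> L"
  proof -
    have "1 + (- Mf) \<le> exp (- Mf)" by (rule exp_ge_add_one_self)
    then have "(1 - Mf) * exp Mf \<le> exp (- Mf) * exp Mf" by (intro mult_right_mono) auto
    also have "\<dots> = 1" by (simp add: exp_minus field_simps)
    finally show ?thesis unfolding M.B_def L_def by (simp add: algebra_simps)
  qed
  have BeB: "M.B * exp M.B \<le> L * exp L"
    by (rule mult_mono) (use BL B0 L0 in auto)
  have eeq: "\<And>t. (\<lambda>x. u (x, t) - hu (x, t)) = (\<lambda>x. M.e x t)" by (simp add: M.e_def)
  have N0: "L2norm (\<lambda>x. u0 x - hu0 x) = L2norm (\<lambda>x. M.e x 0)"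
    by (rule L2norm_cong) (simp add: M.e_def u_ic hu_ic)
  have part2: "\<forall>t\<ge>1. \<forall>x\<in>{0..1}. hu (x, t) = u (x, t)"
    using M.e_zero by (auto simp: M.e_def)
  have part1: "L2norm (\<lambda>x. u (x, t) - hu (x, t)) \<le>
       exp c * (1 + L * exp L) * (1 + L) * exp (- c * t) * L2norm (\<lambda>x. u0 x - hu0 x)"
    if t: "0 \<le> t" and c: "0 < c" for t c
  proof -
    have Mpos: "0 \<le> exp c * (1 + L * exp L) * (1 + L) * exp (- c * t) * L2norm (\<lambda>x. u0 x - hu0 x)"
      using L0 by (intro mult_nonneg_nonneg L2norm_nonneg) auto
    show ?thesis
    proof (cases "1 \<le> t")
      case True
      have "L2norm (\<lambda>x. u (x, t) - hu (x, t)) = L2norm (\<lambda>x. 0)"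
        unfolding eeq by (rule L2norm_cong) (rule M.e_zero[OF True])
      also have "\<dots> = 0" by (simp add: L2norm_def)
      finally show ?thesis using Mpos by simp
    next
      case False
      have "L2norm (\<lambda>x. u (x, t) - hu (x, t)) \<le> (1 + M.B) * (1 + M.B * exp M.B) * L2norm (\<lambda>x. u0 x - hu0 x)"
        unfolding eeq N0 by (rule M.e_L2[OF t])
      also have "\<dots> \<le> (1 + L) * (1 + L * exp L) * L2norm (\<lambda>x. u0 x - hu0 x)"
        by (intro mult_right_mono mult_mono L2norm_nonneg) (use BL BeB B0 L0 in auto)
      also have "\<dots> \<le> exp (c - c * t) * ((1 + L) * (1 + L * exp L) * L2norm (\<lambda>x. u0 x - hu0 x))"
      proof -
        have "1 \<le> exp (c - c * t)" using False c by (simp add: mult_left_le)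
        moreover have "0 \<le> (1 + L) * (1 + L * exp L) * L2norm (\<lambda>x. u0 x - hu0 x)"
          using L0 by (intro mult_nonneg_nonneg L2norm_nonneg) auto
        ultimately show ?thesis by (simp add: mult_le_cancel_right1 mult_right_mono_neg)
      qed
      also have "\<dots> = exp c * (1 + L * exp L) * (1 + L) * exp (- c * t) * L2norm (\<lambda>x. u0 x - hu0 x)"
        by (simp add: exp_diff exp_minus field_simps)
      finally show ?thesis .
    qed
  qed
  show ?thesis
    unfolding Let_def Mf_def[symmetric] L_def[symmetric] using part1 part2 by blast
qed

end
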